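(* Let $G$ be a graph, $k$ a positive integer, $P$ a non-trivial prime graph in a split decomposition of $G$, and suppose $G$ has a branch decomposition of sm-width less than $k$. If $b\in V(P)$ satisfies $|\operatorname{act}(b:P)|\ge 3k$ and $|\operatorname{act}(N_P(b):P)|\ge 9k$, then there exists $a\in N_P(b)$ such that $a$ and $b$ form a heavy pair, i.e. $|\operatorname{act}(a:P)|\ge 3k$.
   Context: Graphs are finite, simple, undirected; $\overline{A}=V(G)\setminus A$; $N(S)=N_G(S)=(\bigcup_{v\in S}N(v))\setminus S$. A split of a connected graph $G$ is a partition $(V_1,V_2)$ of $V(G)$ with $|V_1|,|V_2|\ge2$ such that every vertex of $V_1$ with a neighbour in $V_2$ has the same neighbourhood in $V_2$. $\operatorname{mm}(A)$ is the maximum size of a matching in the bipartite graph of edges between $A$ and $\overline A$; $\operatorname{sm}(A)=1$ if $(A,\overline A)$ is a split, else $\operatorname{sm}(A)=\operatorname{mm}(A)$. A branch decomposition $(T,\delta)$: tree of max degree 3, bijection $\delta$ from leaves to $V(G)$; each edge of $T$ induces the cut given by the leaf-images of the two components of $T-e$; its sm-width is the max of $\operatorname{sm}$ over induced cuts. Split decomposition: decomposing along a split $(V_1,V_2)$ gives $G[V_1]$ plus a new marker adjacent to $N_G(V_2)$ and $G[V_2]$ plus the same marker adjacent to $N_G(V_1)$; prime = no split; non-trivial = more than 3 vertices; a split decomposition recursively decomposes until all parts $G_1,\dots,G_q$ are prime, with tree having prime graphs as nodes adjacent iff sharing a marker. For $v\in V(G_i)$: $\operatorname{tot}(v:G_i)=\{v\}$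 if $v\in V(G)$, else (marker shared with $G_j$) the vertices of $V(G)$ in the prime graphs of the component of the tree minus $G_i$ containing $G_j$. $\operatorname{act}(v:G_i)=N_G(V(G)\setminus\operatorname{tot}(v:G_i))$; for sets, $\operatorname{act}(V':G_i)=\bigcup_{v\in V'}\operatorname{act}(v:G_i)$. With respect to $k$, two adjacent vertices $a,b$ of a prime graph $G_i$ form a heavy pair (and $ab$ is a heavy edge) if $|\operatorname{act}(a:G_i)|\ge 3k$ and $|\operatorname{act}(b:G_i)|\ge 3k$. *)

theory Defs
  imports Main
begin

type_synonym 'a graph = "'a set \<times> ('a \<Rightarrow> 'a \<Rightarrow> bool)"

definition verts :: "'a graph \<Rightarrow> 'a set" where "verts G = fst G"
definition adj :: "'a graph \<Rightarrow> 'a \<Rightarrow> 'a \<Rightarrow> bool" where "adj G = snd G"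

definition simple_graph :: "'a graph \<Rightarrow> bool" where
  "simple_graph G \<longleftrightarrow> finite (verts G) \<and>
     (\<forall>x y. adj G x y \<longrightarrow> x \<in> verts G \<and> y \<in> verts G \<and> x \<noteq> y \<and> adj G y x)"

definition nbr :: "'a graph \<Rightarrow> 'a \<Rightarrow> 'a set" where
  "nbr G v = {u \<in> verts G. adj G v u}"

definition nbrs :: "'a graph \<Rightarrow> 'a set \<Rightarrow> 'a set" where
  "nbrs G S = (\<Union>v\<in>S. nbr G v) - S"

definition connected :: "'a graph \<Rightarrow> bool" where
  "connected G \<longleftrightarrow> verts G \<noteq> {} \<and>
     (\<forall>x\<in>verts G. \<forall>y\<in>verts G. (x, y) \<in> {(u, v). adj G u v}\<^sup>*)"

definition is_split :: "'a graph \<Rightarrow> 'a set \<Rightarrow> 'a set \<Rightarrow> bool" where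
  "is_split H V1 V2 \<longleftrightarrow> connected H \<and> V1 \<union> V2 = verts H \<and> V1 \<inter> V2 = {} \<and>
     card V1 \<ge> 2 \<and> card V2 \<ge> 2 \<and>
     (\<forall>x\<in>V1. \<forall>y\<in>V1. nbr H x \<inter> V2 \<noteq> {} \<and> nbr H y \<inter> V2 \<noteq> {} \<longrightarrow>
        nbr H x \<inter> V2 = nbr H y \<inter> V2)"

definition prime_graph :: "'a graph \<Rightarrow> bool" where
  "prime_graph H \<longleftrightarrow> \<not> (\<exists>V1 V2. is_split H V1 V2)"

definition decomp_part :: "'a graph \<Rightarrow> 'a set \<Rightarrow> 'a set \<Rightarrow> 'a \<Rightarrow> 'a graph" where
  "decomp_part H V1 V2 m =
     (insert m V1,
      \<lambda>x y. (x \<in> V1 \<and> y \<in> V1 \<and> adj H x y) \<or> (x = m \<and> y \<in> nbrs H V2) \<or> (y = m \<and> x \<in> nbrs H V2))"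

text \<open>Partial split decompositions of a connected graph G, represented by the set of
  current parts; each step decomposes one part along a split with a fresh marker.\<close>
inductive split_dec :: "'a graph \<Rightarrow> 'a graph set \<Rightarrow> bool" for G where
  base: "connected G \<Longrightarrow> split_dec G {G}"
| step: "split_dec G D \<Longrightarrow> H \<in> D \<Longrightarrow> is_split H V1 V2 \<Longrightarrow> m \<notin> verts G \<Longrightarrow>
         (\<forall>Q\<in>D. m \<notin> verts Q) \<Longrightarrow>
         split_dec G (insert (decomp_part H V1 V2 m) (insert (decomp_part H V2 V1 m) (D - {H})))"

definition split_decomposition :: "'a graph \<Rightarrow> 'a graph set \<Rightarrow> bool" where
  "split_decomposition G D \<longleftrightarrow> split_dec G D \<and> (\<forall>Q\<in>D. prime_graph Q)"

text \<open>Decomposition tree: parts are adjacent iff they share a (marker) vertex.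
  Edge relation of the tree with the node P removed.\<close>
definition tree_rel_without :: "'a graph set \<Rightarrow> 'a graph \<Rightarrow> ('a graph \<times> 'a graph) set" where
  "tree_rel_without D P = {(A, B). A \<in> D \<and> B \<in> D \<and> A \<noteq> P \<and> B \<noteq> P \<and> A \<noteq> B \<and>
                                    verts A \<inter> verts B \<noteq> {}}"

definition tot :: "'a graph \<Rightarrow> 'a graph set \<Rightarrow> 'a graph \<Rightarrow> 'a \<Rightarrow> 'a set" where
  "tot G D P v = (if v \<in> verts G then {v}
     else verts G \<inter> \<Union>{verts R | R Q. Q \<in> D \<and> Q \<noteq> P \<and> v \<in> verts Q \<and>
                                        (Q, R) \<in> (tree_rel_without D P)\<^sup>*})"

definition act :: "'a graph \<Rightarrow> 'a graph set \<Rightarrow> 'a graph \<Rightarrow> 'a \<Rightarrow> 'a set" where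
  "act G D P v = nbrs G (verts G - tot G D P v)"

definition act_set :: "'a graph \<Rightarrow> 'a graph set \<Rightarrow> 'a graph \<Rightarrow> 'a set \<Rightarrow> 'a set" where
  "act_set G D P S = (\<Union>v\<in>S. act G D P v)"

definition mm :: "'a graph \<Rightarrow> 'a set \<Rightarrow> nat" where
  "mm G A = Max {card M | M. M \<subseteq> {(a, b). a \<in> A \<and> b \<in> verts G - A \<and> adj G a b} \<and>
                             inj_on fst M \<and> inj_on snd M}"

definition sm :: "'a graph \<Rightarrow> 'a set \<Rightarrow> nat" where
  "sm G A = (if is_split G A (verts G - A) then 1 else mm G A)"

definition tree :: "nat set \<Rightarrow> nat set set \<Rightarrow> bool" where
  "tree N E \<longleftrightarrow> finite N \<and> N \<noteq> {} \<and>
     E \<subseteq> {{x, y} | x y. x \<in> N \<and> y \<in> N \<and> x \<noteq> y} \<and>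
     (\<forall>x\<in>N. \<forall>y\<in>N. (x, y) \<in> {(u, v). {u, v} \<in> E}\<^sup>*) \<and>
     card E + 1 = card N"

definition tdeg :: "nat set set \<Rightarrow> nat \<Rightarrow> nat" where
  "tdeg E x = card {e \<in> E. x \<in> e}"

definition leaves :: "nat set \<Rightarrow> nat set set \<Rightarrow> nat set" where
  "leaves N E = {x \<in> N. tdeg E x \<le> 1}"

definition branch_decomposition :: "'a graph \<Rightarrow> nat set \<Rightarrow> nat set set \<Rightarrow> (nat \<Rightarrow> 'a) \<Rightarrow> bool" where
  "branch_decomposition G N E \<delta> \<longleftrightarrow> tree N E \<and> (\<forall>x\<in>N. tdeg E x \<le> 3) \<and>
     bij_betw \<delta> (leaves N E) (verts G)"

definition comp_without :: "nat set \<Rightarrow> nat set set \<Rightarrow> nat set \<Rightarrow> nat \<Rightarrow> nat set" where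
  "comp_without N E e x = {y \<in> N. (x, y) \<in> {(u, v). {u, v} \<in> E - {e}}\<^sup>*}"

definition induced_cut :: "nat set \<Rightarrow> nat set set \<Rightarrow> (nat \<Rightarrow> 'a) \<Rightarrow> nat set \<Rightarrow> nat \<Rightarrow> 'a set" where
  "induced_cut N E \<delta> e x = \<delta> ` (leaves N E \<inter> comp_without N E e x)"

definition sm_width_less :: "'a graph \<Rightarrow> nat \<Rightarrow> bool" where
  "sm_width_less G k \<longleftrightarrow> (\<exists>N E \<delta>. branch_decomposition G N E \<delta> \<and>
     (\<forall>e\<in>E. \<forall>x\<in>e. sm G (induced_cut N E \<delta> e x) < k))"

end

theory Submission
  imports Defs
begin

definition erel :: "'b set set \<Rightarrow> ('b \<times> 'b) set" where
  "erel F = {(u, v). {u, v} \<in> F}"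

lemma sym_erel: "sym (erel F)"
  by (auto simp: sym_def erel_def insert_commute)

lemma erel_rtrancl_sym: "(x, y) \<in> (erel F)\<^sup>* \<Longrightarrow> (y, x) \<in> (erel F)\<^sup>*"
  using sym_erel sym_rtrancl by (metis symD)

definition pairs :: "'b set \<Rightarrow> 'b set set" where
  "pairs N = {{x, y} | x y. x \<in> N \<and> y \<in> N \<and> x \<noteq> y}"

lemma erel_in: "F \<subseteq> pairs N \<Longrightarrow> (u, v) \<in> erel F \<Longrightarrow> u \<in> N \<and> v \<in> N \<and> u \<noteq> v"
  unfolding erel_def pairs_def by (auto simp: doubleton_eq_iff)

lemma reach_restrict:
  assumes "F \<subseteq> pairs N" "(a, y) \<in> (erel F)\<^sup>*"
  shows "(a, y) \<in> (erel {g\<in>F. g \<subseteq> {z. (a, z) \<in> (erel F)\<^sup>*}})\<^sup>*"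
  using assms(2)
proof (induction rule: rtrancl_induct)
  case base
  then show ?case by simp
next
  case (step y z)
  have "(a, z) \<in> (erel F)\<^sup>*" using step by auto
  then have "{y, z} \<in> {g\<in>F. g \<subseteq> {z. (a, z) \<in> (erel F)\<^sup>*}}"
    using step by (auto simp: erel_def)
  then have "(y, z) \<in> erel {g\<in>F. g \<subseteq> {z. (a, z) \<in> (erel F)\<^sup>*}}"
    by (simp add: erel_def)
  then show ?case using step by (meson rtrancl.rtrancl_into_rtrancl)
qed

lemma finite_pairs: "finite N \<Longrightarrow> F \<subseteq> pairs N \<Longrightarrow> finite F"
  by (rule finite_subset[of _ "Pow N"]) (auto simp: pairs_def)

lemma conn_card:
  assumes "finite N" "F \<subseteq> pairs N" "\<forall>x\<in>N. \<forall>y\<in>N. (x, y) \<in> (erel F)\<^sup>*"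
  shows "card N \<le> card F + 1"
  using assms
proof (induction "card F" arbitrary: N F rule: less_induct)
  case less
  have finF: "finite F" using finite_pairs less.prems by blast
  show ?case
  proof (cases "F = {}")
    case True
    then have "erel F = {}" by (simp add: erel_def)
    then have "\<forall>x\<in>N. \<forall>y\<in>N. x = y" using less.prems(3) by auto
    then have "card N \<le> 1" using less.prems(1) by (simp add: card_le_Suc0_iff_eq)
    then show ?thesis by simp
  next
    case False
    then obtain f where f: "f \<in> F" by blast
    then obtain a b where ab: "f = {a, b}" "a \<in> N" "b \<in> N" "a \<noteq> b"
      using less.prems(2) by (auto simp: pairs_def)
    define F' where "F' = F - {f}"
    have F'p: "F' \<subseteq> pairs N" using less.prems(2) F'_def by auto
    have cF': "card F' < card F" using F'_def f finF by (metis card_Diff1_less)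
    have cF'': "card F' + 1 = card F"
    proof -
      have "card F' = card F - 1" by (simp add: F'_def f finF card_Diff_singleton)
      moreover have "card F > 0" using f finF card_gt_0_iff by blast
      ultimately show ?thesis by simp
    qed
    show ?thesis
    proof (cases "(a, b) \<in> (erel F')\<^sup>*")
      case True
      have "erel F \<subseteq> (erel F')\<^sup>*"
      proof
        fix p assume "p \<in> erel F"
        then obtain u v where p: "p = (u, v)" "{u, v} \<in> F" by (auto simp: erel_def)
        show "p \<in> (erel F')\<^sup>*"
        proof (cases "{u, v} = f")
          case True
          then have "(u = a \<and> v = b) \<or> (u = b \<and> v = a)" using ab by (auto simp: doubleton_eq_iff)
          then show ?thesis using \<open>(a, b) \<in> (erel F')\<^sup>*\<close> erel_rtrancl_sym[OF \<open>(a, b) \<in> (erel F')\<^sup>*\<close>] p by auto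
        next
          case False
          then have "(u, v) \<in> erel F'" using p by (auto simp: erel_def F'_def)
          then show ?thesis using p by auto
        qed
      qed
      then have sub: "(erel F)\<^sup>* \<subseteq> (erel F')\<^sup>*"
        by (rule rtrancl_subset_rtrancl)
      have "\<forall>x\<in>N. \<forall>y\<in>N. (x, y) \<in> (erel F')\<^sup>*"
      proof (intro ballI)
        fix x y assume "x \<in> N" "y \<in> N"
        then have "(x, y) \<in> (erel F)\<^sup>*" using less.prems(3) by simp
        then show "(x, y) \<in> (erel F')\<^sup>*" using sub by (rule subsetD[rotated])
      qed
      then have "card N \<le> card F' + 1"
        using less.hyps[OF cF' less.prems(1) F'p] by simp
      then show ?thesis using cF' by simp
    next
      case False
      define N1 where "N1 = {y\<in>N. (a, y) \<in> (erel F')\<^sup>*}"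
      define N2 where "N2 = {y\<in>N. (b, y) \<in> (erel F')\<^sup>*}"
      define F1 where "F1 = {g\<in>F'. g \<subseteq> {z. (a, z) \<in> (erel F')\<^sup>*}}"
      define F2 where "F2 = {g\<in>F'. g \<subseteq> {z. (b, z) \<in> (erel F')\<^sup>*}}"
      have disj: "N1 \<inter> N2 = {}"
      proof (rule ccontr)
        assume "N1 \<inter> N2 \<noteq> {}"
        then obtain y where "(a, y) \<in> (erel F')\<^sup>*" "(b, y) \<in> (erel F')\<^sup>*"
          by (auto simp: N1_def N2_def)
        then have "(a, b) \<in> (erel F')\<^sup>*" by (metis erel_rtrancl_sym rtrancl_trans)
        then show False using False by simp
      qed
      have cover: "N \<subseteq> N1 \<union> N2"
      proof
        fix y assume y: "y \<in> N"
        have "(a, y) \<in> (erel F)\<^sup>*" using less.prems(3) ab y by blast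
        then have "(a, y) \<in> (erel F')\<^sup>* \<or> (b, y) \<in> (erel F')\<^sup>*"
        proof (induction rule: rtrancl_induct)
          case base then show ?case by simp
        next
          case (step y z)
          then have yz: "{y, z} \<in> F" by (simp add: erel_def)
          show ?case
          proof (cases "{y, z} = f")
            case True
            then have "z = a \<or> z = b" using ab by (auto simp: doubleton_eq_iff)
            then show ?thesis by auto
          next
            case False
            then have "(y, z) \<in> erel F'" using yz by (simp add: erel_def F'_def)
            then show ?thesis using step.IH by (meson rtrancl.rtrancl_into_rtrancl)
          qed
        qed
        then show "y \<in> N1 \<union> N2" using y by (auto simp: N1_def N2_def)
      qed
      have Nsplit: "N = N1 \<union> N2" using cover by (auto simp: N1_def N2_def)
      have F1p: "F1 \<subseteq> pairs N1"
      proof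
        fix g assume g: "g \<in> F1"
        then obtain u v where "g = {u, v}" "u \<in> N" "v \<in> N" "u \<noteq> v"
          using F'p by (auto simp: F1_def pairs_def)
        then show "g \<in> pairs N1" using g by (auto simp: F1_def N1_def pairs_def)
      qed
      have F2p: "F2 \<subseteq> pairs N2"
      proof
        fix g assume g: "g \<in> F2"
        then obtain u v where "g = {u, v}" "u \<in> N" "v \<in> N" "u \<noteq> v"
          using F'p by (auto simp: F2_def pairs_def)
        then show "g \<in> pairs N2" using g by (auto simp: F2_def N2_def pairs_def)
      qed
      have F12: "F' \<subseteq> F1 \<union> F2"
      proof
        fix g assume g: "g \<in> F'"
        then obtain u v where uv: "g = {u, v}" "u \<in> N" "v \<in> N"
          using F'p by (auto simp: pairs_def)
        have e: "(u, v) \<in> erel F'" "(v, u) \<in> erel F'" using g uv by (auto simp: erel_def) (metis insert_commute)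
        have "u \<in> N1 \<or> u \<in> N2" using cover uv(2) by blast
        then show "g \<in> F1 \<union> F2"
        proof
          assume "u \<in> N1"
          then have au: "(a, u) \<in> (erel F')\<^sup>*" unfolding N1_def by simp
          then have av: "(a, v) \<in> (erel F')\<^sup>*" using e(1) by (rule rtrancl.rtrancl_into_rtrancl)
          have "g \<in> F1" unfolding F1_def using g uv(1) au av by simp
          then show ?thesis by simp
        next
          assume "u \<in> N2"
          then have au: "(b, u) \<in> (erel F')\<^sup>*" unfolding N2_def by simp
          then have av: "(b, v) \<in> (erel F')\<^sup>*" using e(1) by (rule rtrancl.rtrancl_into_rtrancl)
          have "g \<in> F2" unfolding F2_def using g uv(1) au av by simp
          then show ?thesis by simp
        qed
      qed
      have F12d: "F1 \<inter> F2 = {}"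
      proof (rule ccontr)
        assume "F1 \<inter> F2 \<noteq> {}"
        then obtain g where g: "g \<in> F1" "g \<in> F2" by blast
        then obtain u v where "g = {u, v}" "u \<in> N"
          using F'p by (auto simp: F1_def pairs_def)
        then have "u \<in> N1" "u \<in> N2" using g by (auto simp: F1_def F2_def N1_def N2_def)
        then show False using disj by blast
      qed
      have finF': "finite F'" using finF F'_def by simp
      have "finite F1" "finite F2" using finF' by (auto simp: F1_def F2_def)
      then have "card F1 + card F2 = card (F1 \<union> F2)"
        using F12d by (simp add: card_Un_disjoint)
      also have "F1 \<union> F2 = F'" using F12 by (auto simp: F1_def F2_def)
      finally have cF12: "card F1 + card F2 = card F'" .
      have c1: "card F1 < card F" using cF' cF12 by simp
      have c2: "card F2 < card F" using cF' cF12 by simp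
      have con1: "\<forall>x\<in>N1. \<forall>y\<in>N1. (x, y) \<in> (erel F1)\<^sup>*"
      proof (intro ballI)
        fix x y assume "x \<in> N1" "y \<in> N1"
        then have "(a, x) \<in> (erel F1)\<^sup>*" "(a, y) \<in> (erel F1)\<^sup>*"
          using reach_restrict[OF F'p] unfolding N1_def F1_def by auto
        then show "(x, y) \<in> (erel F1)\<^sup>*" by (metis erel_rtrancl_sym rtrancl_trans)
      qed
      have con2: "\<forall>x\<in>N2. \<forall>y\<in>N2. (x, y) \<in> (erel F2)\<^sup>*"
      proof (intro ballI)
        fix x y assume "x \<in> N2" "y \<in> N2"
        then have "(b, x) \<in> (erel F2)\<^sup>*" "(b, y) \<in> (erel F2)\<^sup>*"
          using reach_restrict[OF F'p] unfolding N2_def F2_def by auto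
        then show "(x, y) \<in> (erel F2)\<^sup>*" by (metis erel_rtrancl_sym rtrancl_trans)
      qed
      have fN1: "finite N1" "finite N2" using less.prems(1) by (auto simp: N1_def N2_def)
      have "card N1 \<le> card F1 + 1" using less.hyps[OF c1 fN1(1) F1p con1] .
      moreover have "card N2 \<le> card F2 + 1" using less.hyps[OF c2 fN1(2) F2p con2] .
      moreover have "card N = card N1 + card N2" using Nsplit disj fN1 by (simp add: card_Un_disjoint)
      ultimately show ?thesis using cF12 cF'' by linarith
    qed
  qed
qed

lemma comp_without_erel: "comp_without N E e x = {y\<in>N. (x, y) \<in> (erel (E - {e}))\<^sup>*}"
  by (simp add: comp_without_def erel_def)

lemma tree_pairs: "tree N E \<Longrightarrow> E \<subseteq> pairs N"
  by (simp add: tree_def pairs_def)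

lemma tree_conn: "tree N E \<Longrightarrow> x \<in> N \<Longrightarrow> y \<in> N \<Longrightarrow> (x, y) \<in> (erel E)\<^sup>*"
  by (simp add: tree_def erel_def)

lemma pairs_mem: "F \<subseteq> pairs N \<Longrightarrow> {u, v} \<in> F \<Longrightarrow> u \<in> N \<and> v \<in> N \<and> u \<noteq> v"
  using erel_in[of F N u v] by (simp add: erel_def)

lemma two_sides:
  assumes "{a, b} \<in> E" "(a, z) \<in> (erel E)\<^sup>*"
  shows "(a, z) \<in> (erel (E - {{a, b}}))\<^sup>* \<or> (b, z) \<in> (erel (E - {{a, b}}))\<^sup>*"
  using assms(2)
proof (induction rule: rtrancl_induct)
  case base then show ?case by simp
next
  case (step y z)
  then have yz: "{y, z} \<in> E" by (simp add: erel_def)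
  show ?case
  proof (cases "{y, z} = {a, b}")
    case True
    then have "z = a \<or> z = b" by (auto simp: doubleton_eq_iff)
    then show ?thesis by auto
  next
    case False
    then have "(y, z) \<in> erel (E - {{a, b}})" using yz by (simp add: erel_def)
    then show ?thesis using step.IH by (meson rtrancl.rtrancl_into_rtrancl)
  qed
qed

lemma bridge:
  assumes T: "tree N E" and e: "{x, y} \<in> E"
  shows "y \<notin> comp_without N E {x, y} x"
proof
  assume "y \<in> comp_without N E {x, y} x"
  then have xy: "(x, y) \<in> (erel (E - {{x, y}}))\<^sup>*" by (simp add: comp_without_erel)
  define F' where "F' = E - {{x, y}}"
  have "erel E \<subseteq> (erel F')\<^sup>*"
  proof
    fix p assume "p \<in> erel E"
    then obtain u v where p: "p = (u, v)" "{u, v} \<in> E" by (auto simp: erel_def)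
    show "p \<in> (erel F')\<^sup>*"
    proof (cases "{u, v} = {x, y}")
      case True
      then have "(u = x \<and> v = y) \<or> (u = y \<and> v = x)" by (auto simp: doubleton_eq_iff)
      then show ?thesis using xy erel_rtrancl_sym[OF xy] p unfolding F'_def by auto
    next
      case False
      then have "(u, v) \<in> erel F'" using p by (auto simp: erel_def F'_def)
      then show ?thesis using p by auto
    qed
  qed
  then have sub: "(erel E)\<^sup>* \<subseteq> (erel F')\<^sup>*" by (rule rtrancl_subset_rtrancl)
  have con: "\<forall>a\<in>N. \<forall>b\<in>N. (a, b) \<in> (erel F')\<^sup>*"
  proof (intro ballI)
    fix a b assume "a \<in> N" "b \<in> N"
    then have "(a, b) \<in> (erel E)\<^sup>*" using tree_conn[OF T] by simp
    then show "(a, b) \<in> (erel F')\<^sup>*" using sub by (rule subsetD[rotated])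
  qed
  have fN: "finite N" using T by (simp add: tree_def)
  have Ep: "E \<subseteq> pairs N" using tree_pairs[OF T] .
  have fE: "finite E" using finite_pairs[OF fN Ep] .
  have "F' \<subseteq> pairs N" using Ep F'_def by auto
  then have "card N \<le> card F' + 1" using conn_card[OF fN _ con] by simp
  moreover have "card F' + 1 = card E"
  proof -
    have "card F' = card E - 1" by (simp add: F'_def e fE card_Diff_singleton)
    moreover have "card E > 0" using e fE card_gt_0_iff by blast
    ultimately show ?thesis by simp
  qed
  moreover have "card E + 1 = card N" using T by (simp add: tree_def)
  ultimately show False by simp
qed

lemma comp_cover:
  assumes Ep: "E \<subseteq> pairs N" and z: "z \<in> comp_without N E e x"
  shows "z = x \<or> (\<exists>x'. {x, x'} \<in> E \<and> {x, x'} \<noteq> e \<and> z \<in> comp_without N E {x, x'} x')"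
proof -
  have "(x, z) \<in> (erel (E - {e}))\<^sup>*" using z by (simp add: comp_without_erel)
  then show ?thesis
  proof (induction rule: rtrancl_induct)
    case base then show ?case by simp
  next
    case (step y z)
    then have yz: "{y, z} \<in> E" "{y, z} \<noteq> e" by (auto simp: erel_def)
    have zN: "z \<in> N" "y \<in> N" using pairs_mem[OF Ep yz(1)] by auto
    from step.IH show ?case
    proof
      assume "y = x"
      then have "{x, z} \<in> E \<and> {x, z} \<noteq> e \<and> z \<in> comp_without N E {x, z} z"
        using yz zN by (simp add: comp_without_erel)
      then show ?thesis by blast
    next
      assume "\<exists>x'. {x, x'} \<in> E \<and> {x, x'} \<noteq> e \<and> y \<in> comp_without N E {x, x'} x'"
      then obtain x' where x': "{x, x'} \<in> E" "{x, x'} \<noteq> e" "y \<in> comp_without N E {x, x'} x'" by blast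
      have x'N: "x' \<in> N" using pairs_mem[OF Ep x'(1)] by auto
      show ?thesis
      proof (cases "{y, z} = {x, x'}")
        case True
        then have "z = x \<or> z = x'" by (auto simp: doubleton_eq_iff)
        then show ?thesis
        proof
          assume "z = x'"
          then have "z \<in> comp_without N E {x, x'} x'" using x'N by (simp add: comp_without_erel)
          then show ?thesis using x' by blast
        qed simp
      next
        case False
        then have "(y, z) \<in> erel (E - {{x, x'}})" using yz by (simp add: erel_def)
        moreover have "(x', y) \<in> (erel (E - {{x, x'}}))\<^sup>*" using x'(3) by (simp add: comp_without_erel)
        ultimately have "(x', z) \<in> (erel (E - {{x, x'}}))\<^sup>*" by (rule rtrancl.rtrancl_into_rtrancl[rotated])
        then have "z \<in> comp_without N E {x, x'} x'" using zN by (simp add: comp_without_erel)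
        then show ?thesis using x' by blast
      qed
    qed
  qed
qed

lemma comp_sub:
  assumes Ep: "E \<subseteq> pairs N" and xe: "x \<in> e" and e': "{x, x'} \<in> E" "{x, x'} \<noteq> e"
    and nx: "x \<notin> comp_without N E {x, x'} x'"
  shows "comp_without N E {x, x'} x' \<subseteq> comp_without N E e x"
proof
  fix z assume z: "z \<in> comp_without N E {x, x'} x'"
  have x'N: "x' \<in> N" "x \<in> N" using pairs_mem[OF Ep e'(1)] by auto
  have "(x', z) \<in> (erel (E - {{x, x'}}))\<^sup>*" using z by (simp add: comp_without_erel)
  then have "(x', z) \<in> (erel (E - {e}))\<^sup>*"
  proof (induction rule: rtrancl_induct)
    case base then show ?case by simp
  next
    case (step y z)
    then have yz: "{y, z} \<in> E" "{y, z} \<noteq> {x, x'}" by (auto simp: erel_def)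
    have zN: "z \<in> N" "y \<in> N" using pairs_mem[OF Ep yz(1)] by auto
    have "z \<in> comp_without N E {x, x'} x'" "y \<in> comp_without N E {x, x'} x'"
      using step(1,2) rtrancl.rtrancl_into_rtrancl[OF step(1,2)] zN by (auto simp: comp_without_erel)
    then have "z \<noteq> x" "y \<noteq> x" using nx by auto
    then have "{y, z} \<noteq> e" using xe by auto
    then have "(y, z) \<in> erel (E - {e})" using yz by (simp add: erel_def)
    then show ?case using step.IH by (rule rtrancl.rtrancl_into_rtrancl[rotated])
  qed
  moreover have "(x, x') \<in> erel (E - {e})" using e' by (simp add: erel_def)
  ultimately have "(x, z) \<in> (erel (E - {e}))\<^sup>*" by (meson converse_rtrancl_into_rtrancl)
  moreover have "z \<in> N" using z by (simp add: comp_without_def)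
  ultimately show "z \<in> comp_without N E e x" by (simp add: comp_without_erel)
qed

lemma balanced:
  assumes T: "tree N E" and deg: "\<forall>x\<in>N. tdeg E x \<le> 3"
    and Y: "Y \<subseteq> \<delta> ` leaves N E" "finite Y" "card Y \<ge> 9 * k" and k: "k > 0"
  shows "\<exists>e\<in>E. \<exists>x\<in>e. card (Y \<inter> induced_cut N E \<delta> e x) \<ge> 3 * k \<and>
                      card (Y - induced_cut N E \<delta> e x) \<ge> 3 * k"
proof -
  define W where "W e x = card (Y \<inter> induced_cut N E \<delta> e x)" for e x
  define C where "C e x = comp_without N E e x" for e x
  have fN: "finite N" using T by (simp add: tree_def)
  have Ep: "E \<subseteq> pairs N" using tree_pairs[OF T] .
  have fE: "finite E" using finite_pairs[OF fN Ep] .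
  have lN: "leaves N E \<subseteq> N" by (auto simp: leaves_def)
  have "card Y \<le> card (\<delta> ` leaves N E)" using Y fN lN by (meson card_mono finite_imageI finite_subset)
  also have "\<dots> \<le> card (leaves N E)" by (rule card_image_le) (use fN lN finite_subset in blast)
  also have "\<dots> \<le> card N" using fN lN by (rule card_mono)
  finally have "card N \<ge> 9" using Y k by linarith
  then have "card E \<ge> 8" using T by (simp add: tree_def)
  then have "E \<noteq> {}" by auto
  then obtain e where e: "e \<in> E" by blast
  then obtain a b where ab: "e = {a, b}" "a \<in> N" "b \<in> N" "a \<noteq> b" using Ep by (auto simp: pairs_def)
  have "Y \<subseteq> (Y \<inter> induced_cut N E \<delta> e a) \<union> (Y \<inter> induced_cut N E \<delta> e b)"
  proof
    fix y assume yY: "y \<in> Y"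
    then obtain z where z: "z \<in> leaves N E" "y = \<delta> z" using Y by auto
    have zN: "z \<in> N" using z lN by auto
    have "(a, z) \<in> (erel E)\<^sup>*" using tree_conn[OF T ab(2) zN] .
    then have "(a, z) \<in> (erel (E - {e}))\<^sup>* \<or> (b, z) \<in> (erel (E - {e}))\<^sup>*"
      using two_sides[of a b E z] e ab(1) by simp
    then have "z \<in> comp_without N E e a \<or> z \<in> comp_without N E e b"
      using zN by (auto simp: comp_without_erel)
    then show "y \<in> (Y \<inter> induced_cut N E \<delta> e a) \<union> (Y \<inter> induced_cut N E \<delta> e b)"
      using yY z by (auto simp: induced_cut_def)
  qed
  then have "card Y \<le> W e a + W e b" unfolding W_def using Y(2)
    by (metis (no_types, lifting) card_Un_le card_mono finite_Int finite_Un le_trans)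
  then have "W e a \<ge> 3 * k \<or> W e b \<ge> 3 * k" using Y(3) by linarith
  then have ex: "\<exists>p. fst p \<in> E \<and> snd p \<in> fst p \<and> W (fst p) (snd p) \<ge> 3 * k"
    using e ab(1) by (metis fst_conv insertI1 insert_commute snd_conv)
  obtain p where p: "fst p \<in> E \<and> snd p \<in> fst p \<and> W (fst p) (snd p) \<ge> 3 * k"
    and pmin: "\<And>q. fst q \<in> E \<and> snd q \<in> fst q \<and> W (fst q) (snd q) \<ge> 3 * k \<Longrightarrow>
                 card (C (fst p) (snd p)) \<le> card (C (fst q) (snd q))"
    using ex_has_least_nat[of "\<lambda>p. fst p \<in> E \<and> snd p \<in> fst p \<and> W (fst p) (snd p) \<ge> 3 * k"
                                 _ "\<lambda>p. card (C (fst p) (snd p))"] ex by blast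
  define e0 where "e0 = fst p"
  define x0 where "x0 = snd p"
  have e0: "e0 \<in> E" "x0 \<in> e0" "W e0 x0 \<ge> 3 * k" using p e0_def x0_def by auto
  have x0N: "x0 \<in> N" using e0 Ep by (auto simp: pairs_def)
  have min: "\<And>e' x'. e' \<in> E \<Longrightarrow> x' \<in> e' \<Longrightarrow> W e' x' \<ge> 3 * k \<Longrightarrow> card (C e0 x0) \<le> card (C e' x')"
    using pmin[of "(e', x')" for e' x'] e0_def x0_def by auto
  have "card (Y - induced_cut N E \<delta> e0 x0) \<ge> 3 * k"
  proof (rule ccontr)
    assume "\<not> ?thesis"
    then have small: "card (Y - induced_cut N E \<delta> e0 x0) < 3 * k" by simp
    have "card Y = W e0 x0 + card (Y - induced_cut N E \<delta> e0 x0)"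
      unfolding W_def using Y(2) by (metis card_Int_Diff)
    then have big: "W e0 x0 > 6 * k" using small Y(3) by linarith
    define U where "U = {x'. {x0, x'} \<in> E \<and> {x0, x'} \<noteq> e0}"
    have x0C: "x0 \<in> C e0 x0" using x0N by (simp add: C_def comp_without_erel)
    have Wsmall: "W {x0, x'} x' < 3 * k" if "x' \<in> U" for x'
    proof (rule ccontr)
      assume "\<not> ?thesis"
      then have "W {x0, x'} x' \<ge> 3 * k" by simp
      moreover have "{x0, x'} \<in> E" using that U_def by simp
      ultimately have le: "card (C e0 x0) \<le> card (C {x0, x'} x')" using min by simp
      have "{x', x0} \<in> E" using that U_def by (simp add: insert_commute)
      then have nx: "x0 \<notin> C {x0, x'} x'" using bridge[OF T] unfolding C_def by (metis insert_commute)
      have sub: "C {x0, x'} x' \<subseteq> C e0 x0" unfolding C_def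
        using comp_sub[OF Ep e0(2), of x'] that nx unfolding U_def C_def by simp
      have "C {x0, x'} x' \<subset> C e0 x0" using sub nx x0C by blast
      moreover have "finite (C e0 x0)" using fN by (simp add: C_def comp_without_def)
      ultimately have "card (C {x0, x'} x') < card (C e0 x0)" by (rule psubset_card_mono[rotated])
      then show False using le by simp
    qed
    have cover: "C e0 x0 \<subseteq> insert x0 (\<Union>x'\<in>U. C {x0, x'} x')"
      using comp_cover[OF Ep] unfolding C_def U_def by blast
    have inc: "{e'\<in>E. x0 \<in> e'} - {e0} \<subseteq> {e'\<in>E. x0 \<in> e'}" by blast
    have fin_inc: "finite {e'\<in>E. x0 \<in> e'}" using fE by simp
    have card_inc: "card ({e'\<in>E. x0 \<in> e'} - {e0}) = tdeg E x0 - 1"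
      unfolding tdeg_def using e0 fin_inc by (simp add: card_Diff_singleton)
    have imgU: "(\<lambda>x'. {x0, x'}) ` U \<subseteq> {e'\<in>E. x0 \<in> e'} - {e0}" unfolding U_def by auto
    have injU: "inj_on (\<lambda>x'. {x0, x'}) U"
      by (rule inj_onI) (auto simp: doubleton_eq_iff)
    have fU: "finite U"
    proof -
      have "U \<subseteq> N" unfolding U_def using pairs_mem[OF Ep] by blast
      then show ?thesis using fN finite_subset by blast
    qed
    have cardU: "card U \<le> tdeg E x0 - 1"
      using card_inj_on_le[OF injU imgU] fin_inc card_inc by simp
    show False
    proof (cases "x0 \<in> leaves N E")
      case True
      then have "tdeg E x0 \<le> 1" by (simp add: leaves_def)
      then have "U = {}" using cardU fU by simp
      then have "C e0 x0 \<subseteq> {x0}" using cover by simp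
      then have "induced_cut N E \<delta> e0 x0 \<subseteq> \<delta> ` {x0}"
        unfolding induced_cut_def C_def by blast
      then have "W e0 x0 \<le> card (\<delta> ` {x0})" unfolding W_def
        by (meson card_mono finite.emptyI finite.insertI finite_imageI inf_le2 order_trans)
      then have "W e0 x0 \<le> 1" by simp
      then show False using big k by simp
    next
      case False
      then have "tdeg E x0 \<le> 3" using deg x0N by simp
      then have cU: "card U \<le> 2" using cardU by simp
      have "leaves N E \<inter> C e0 x0 \<subseteq> (\<Union>x'\<in>U. leaves N E \<inter> C {x0, x'} x')"
        using cover False by blast
      then have "Y \<inter> induced_cut N E \<delta> e0 x0 \<subseteq> (\<Union>x'\<in>U. Y \<inter> induced_cut N E \<delta> {x0, x'} x')"
        unfolding induced_cut_def C_def by blast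
      then have "W e0 x0 \<le> card (\<Union>x'\<in>U. Y \<inter> induced_cut N E \<delta> {x0, x'} x')"
        unfolding W_def using Y(2) by (intro card_mono) auto
      also have "\<dots> \<le> (\<Sum>x'\<in>U. W {x0, x'} x')" unfolding W_def using fU by (rule card_UN_le)
      also have "\<dots> \<le> (\<Sum>x'\<in>U. 3 * k - 1)"
        using Wsmall by (intro sum_mono) fastforce
      also have "\<dots> = card U * (3 * k - 1)" by simp
      also have "\<dots> \<le> 2 * (3 * k - 1)" using cU by (intro mult_right_mono) auto
      finally show False using big k by linarith
    qed
  qed
  then show ?thesis using e0 unfolding W_def by blast
qed

declare split_paired_All[simp del] split_paired_Ex[simp del]

definition Reach :: "'a graph set \<Rightarrow> 'a graph \<Rightarrow> 'a \<Rightarrow> 'a graph set" where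
  "Reach D P v = {R. \<exists>Q\<in>D. Q \<noteq> P \<and> v \<in> verts Q \<and> (Q, R) \<in> (tree_rel_without D P)\<^sup>*}"

lemma tot_alt: "tot G D P v = (if v \<in> verts G then {v} else verts G \<inter> \<Union>(verts ` Reach D P v))"
proof -
  have "{verts R | R Q. Q \<in> D \<and> Q \<noteq> P \<and> v \<in> verts Q \<and> (Q, R) \<in> (tree_rel_without D P)\<^sup>*}
        = verts ` Reach D P v"
    unfolding Reach_def by blast
  then show ?thesis unfolding tot_def by simp
qed

lemma rel_iff: "(A, B) \<in> tree_rel_without D P \<longleftrightarrow>
   A \<in> D \<and> B \<in> D \<and> A \<noteq> P \<and> B \<noteq> P \<and> A \<noteq> B \<and> verts A \<inter> verts B \<noteq> {}"
  by (simp add: tree_rel_without_def)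

lemma Reach_base: "Q \<in> D \<Longrightarrow> Q \<noteq> P \<Longrightarrow> v \<in> verts Q \<Longrightarrow> Q \<in> Reach D P v"
proof -
  assume "Q \<in> D" "Q \<noteq> P" "v \<in> verts Q"
  then have "\<exists>Q'\<in>D. Q' \<noteq> P \<and> v \<in> verts Q' \<and> (Q', Q) \<in> (tree_rel_without D P)\<^sup>*" by blast
  then show ?thesis unfolding Reach_def by (rule CollectI)
qed

lemma Reach_step: "A \<in> Reach D P v \<Longrightarrow> (A, B) \<in> tree_rel_without D P \<Longrightarrow> B \<in> Reach D P v"
proof -
  assume a: "A \<in> Reach D P v" "(A, B) \<in> tree_rel_without D P"
  then have "\<exists>Q\<in>D. Q \<noteq> P \<and> v \<in> verts Q \<and> (Q, A) \<in> (tree_rel_without D P)\<^sup>*"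
    by (simp add: Reach_def)
  then obtain Q where Q: "Q \<in> D" "Q \<noteq> P" "v \<in> verts Q" "(Q, A) \<in> (tree_rel_without D P)\<^sup>*"
    by blast
  have "(Q, B) \<in> (tree_rel_without D P)\<^sup>*" using Q(4) a(2) by (rule rtrancl.rtrancl_into_rtrancl)
  then have "\<exists>Q\<in>D. Q \<noteq> P \<and> v \<in> verts Q \<and> (Q, B) \<in> (tree_rel_without D P)\<^sup>*" using Q by blast
  then show ?thesis unfolding Reach_def by (rule CollectI)
qed

lemma Reach_induct:
  assumes "R \<in> Reach D P v"
    and "\<And>Q. Q \<in> D \<Longrightarrow> Q \<noteq> P \<Longrightarrow> v \<in> verts Q \<Longrightarrow> \<Phi> Q"
    and "\<And>A B. \<Phi> A \<Longrightarrow> (A, B) \<in> tree_rel_without D P \<Longrightarrow> \<Phi> B"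
  shows "\<Phi> R"
proof -
  have "\<exists>Q\<in>D. Q \<noteq> P \<and> v \<in> verts Q \<and> (Q, R) \<in> (tree_rel_without D P)\<^sup>*"
    using assms(1) by (simp add: Reach_def)
  then obtain Q where Q: "Q \<in> D" "Q \<noteq> P" "v \<in> verts Q" "(Q, R) \<in> (tree_rel_without D P)\<^sup>*"
    by blast
  from Q(4) show ?thesis
  proof (induction rule: rtrancl_induct)
    case base then show ?case by (rule assms(2)[OF Q(1-3)])
  next
    case (step y z) then show ?case using assms(3)[of y z] by simp
  qed
qed

lemma Reach_mem: "R \<in> Reach D P v \<Longrightarrow> R \<in> D \<and> R \<noteq> P"
proof -
  assume "R \<in> Reach D P v"
  then have "\<exists>Q\<in>D. Q \<noteq> P \<and> v \<in> verts Q \<and> (Q, R) \<in> (tree_rel_without D P)\<^sup>*"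
    by (simp add: Reach_def)
  then obtain Q where Q: "Q \<in> D" "Q \<noteq> P" "(Q, R) \<in> (tree_rel_without D P)\<^sup>*"
    by blast
  from Q(3) show ?thesis
  proof (cases rule: rtranclE)
    case base then show ?thesis using Q by simp
  next
    case (step y) then show ?thesis by (simp add: rel_iff)
  qed
qed

definition inv :: "'a graph \<Rightarrow> 'a graph set \<Rightarrow> bool" where
  "inv G D \<longleftrightarrow>
   (\<forall>Q\<in>D. connected Q \<and> (\<forall>x y. adj Q x y \<longrightarrow> adj Q y x \<and> x \<in> verts Q \<and> y \<in> verts Q \<and> x \<noteq> y)) \<and>
   (\<forall>v\<in>verts G. \<forall>Q1\<in>D. \<forall>Q2\<in>D. v \<in> verts Q1 \<longrightarrow> v \<in> verts Q2 \<longrightarrow> Q1 = Q2) \<and>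
   (\<forall>P\<in>D. \<forall>u\<in>verts P. tot G D P u \<noteq> {}) \<and>
   (\<forall>P\<in>D. \<forall>u\<in>verts P. \<forall>v\<in>verts P. u \<noteq> v \<longrightarrow> tot G D P u \<inter> tot G D P v = {}) \<and>
   (\<forall>P\<in>D. verts G \<subseteq> (\<Union>u\<in>verts P. tot G D P u)) \<and>
   (\<forall>P\<in>D. \<forall>u\<in>verts P. \<forall>v\<in>verts P. u \<noteq> v \<longrightarrow>
      (\<forall>x\<in>tot G D P u. \<forall>y\<in>tot G D P v.
          adj G x y \<longleftrightarrow> adj P u v \<and> x \<in> act G D P u \<and> y \<in> act G D P v))"

lemma tot_sub: "tot G D P v \<subseteq> verts G"
  by (auto simp: tot_alt)

lemma act_sub: "act G D P v \<subseteq> tot G D P v"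
  unfolding act_def nbrs_def nbr_def using tot_sub by blast

lemma nbrs_iff:
  assumes "simple_graph G"
  shows "x \<in> nbrs G (verts G - T) \<longleftrightarrow> x \<in> verts G \<and> x \<in> T \<and> (\<exists>z\<in>verts G - T. adj G x z)"
  using assms unfolding nbrs_def nbr_def simple_graph_def by blast

lemma split_complete:
  assumes S: "is_split H V1 V2" and sy: "\<forall>x y. adj H x y \<longrightarrow> adj H y x \<and> x \<in> verts H \<and> y \<in> verts H"
    and x: "x \<in> V1" and y: "y \<in> V2" and x': "y' \<in> V2" "adj H x y'" and y': "x' \<in> V1" "adj H y x'"
  shows "adj H x y"
proof -
  have "adj H x' y" using sy y' by blast
  then have "y \<in> nbr H x' \<inter> V2" using sy y by (auto simp: nbr_def)
  moreover have "y' \<in> nbr H x \<inter> V2" using sy x' by (auto simp: nbr_def)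
  ultimately have "nbr H x \<inter> V2 = nbr H x' \<inter> V2" using S x y'(1) unfolding is_split_def by blast
  then have "y \<in> nbr H x" using \<open>y \<in> nbr H x' \<inter> V2\<close> by blast
  then show ?thesis by (simp add: nbr_def)
qed

lemma split_sym:
  assumes S: "is_split H V1 V2" and sy: "\<forall>x y. adj H x y \<longrightarrow> adj H y x \<and> x \<in> verts H \<and> y \<in> verts H"
  shows "is_split H V2 V1"
proof -
  have a: "nbr H x \<inter> V1 \<subseteq> nbr H y \<inter> V1"
    if xy: "x \<in> V2" "y \<in> V2" "nbr H x \<inter> V1 \<noteq> {}" "nbr H y \<inter> V1 \<noteq> {}" for x y
  proof
    fix z assume z: "z \<in> nbr H x \<inter> V1"
    obtain z' where z': "z' \<in> nbr H y \<inter> V1" using xy by blast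
    have "adj H z y"
      using split_complete[OF S sy, of z y x z'] z z' xy sy by (auto simp: nbr_def)
    then show "z \<in> nbr H y \<inter> V1" using sy z by (auto simp: nbr_def)
  qed
  show ?thesis using S a unfolding is_split_def by (metis inf_commute sup_commute subset_antisym)
qed

lemma inv_parts:
  assumes "inv G D"
  shows "\<forall>Q\<in>D. connected Q \<and> (\<forall>x y. adj Q x y \<longrightarrow> adj Q y x \<and> x \<in> verts Q \<and> y \<in> verts Q \<and> x \<noteq> y)"
    and "\<forall>v\<in>verts G. \<forall>Q1\<in>D. \<forall>Q2\<in>D. v \<in> verts Q1 \<longrightarrow> v \<in> verts Q2 \<longrightarrow> Q1 = Q2"
    and "\<forall>P\<in>D. \<forall>u\<in>verts P. tot G D P u \<noteq> {}"
    and "\<forall>P\<in>D. \<forall>u\<in>verts P. \<forall>v\<in>verts P. u \<noteq> v \<longrightarrow> tot G D P u \<inter> tot G D P v = {}"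
    and "\<forall>P\<in>D. verts G \<subseteq> (\<Union>u\<in>verts P. tot G D P u)"
    and "\<forall>P\<in>D. \<forall>u\<in>verts P. \<forall>v\<in>verts P. u \<noteq> v \<longrightarrow>
      (\<forall>x\<in>tot G D P u. \<forall>y\<in>tot G D P v.
          adj G x y \<longleftrightarrow> adj P u v \<and> x \<in> act G D P u \<and> y \<in> act G D P v)"
  using assms unfolding inv_def by simp_all

lemma inv_adj: "inv G D \<Longrightarrow> Q \<in> D \<Longrightarrow> adj Q x y \<Longrightarrow> adj Q y x \<and> x \<in> verts Q \<and> y \<in> verts Q \<and> x \<noteq> y"
proof -
  assume a: "inv G D" "Q \<in> D" "adj Q x y"
  have "\<forall>x y. adj Q x y \<longrightarrow> adj Q y x \<and> x \<in> verts Q \<and> y \<in> verts Q \<and> x \<noteq> y"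
    using bspec[OF inv_parts(1)[OF a(1)] a(2)] by (rule conjunct2)
  then show ?thesis using a(3) by blast
qed
lemma inv_conn: "inv G D \<Longrightarrow> Q \<in> D \<Longrightarrow> connected Q"
proof -
  assume a: "inv G D" "Q \<in> D"
  show ?thesis using bspec[OF inv_parts(1)[OF a(1)] a(2)] by (rule conjunct1)
qed
lemma inv_uniq: "inv G D \<Longrightarrow> v \<in> verts G \<Longrightarrow> Q1 \<in> D \<Longrightarrow> Q2 \<in> D \<Longrightarrow> v \<in> verts Q1 \<Longrightarrow> v \<in> verts Q2 \<Longrightarrow> Q1 = Q2"
proof -
  assume a: "inv G D" "v \<in> verts G" "Q1 \<in> D" "Q2 \<in> D" "v \<in> verts Q1" "v \<in> verts Q2"
  show ?thesis using bspec[OF bspec[OF bspec[OF inv_parts(2)[OF a(1)] a(2)] a(3)] a(4)] a(5,6) by blast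
qed
lemma inv_ne: "inv G D \<Longrightarrow> P \<in> D \<Longrightarrow> u \<in> verts P \<Longrightarrow> tot G D P u \<noteq> {}"
proof -
  assume a: "inv G D" "P \<in> D" "u \<in> verts P"
  show ?thesis using bspec[OF bspec[OF inv_parts(3)[OF a(1)] a(2)] a(3)] .
qed
lemma inv_disj: "inv G D \<Longrightarrow> P \<in> D \<Longrightarrow> u \<in> verts P \<Longrightarrow> v \<in> verts P \<Longrightarrow> u \<noteq> v \<Longrightarrow> tot G D P u \<inter> tot G D P v = {}"
proof -
  assume a: "inv G D" "P \<in> D" "u \<in> verts P" "v \<in> verts P" "u \<noteq> v"
  show ?thesis using bspec[OF bspec[OF bspec[OF inv_parts(4)[OF a(1)] a(2)] a(3)] a(4)] a(5) by blast
qed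
lemma inv_cov: "inv G D \<Longrightarrow> P \<in> D \<Longrightarrow> x \<in> verts G \<Longrightarrow> \<exists>u\<in>verts P. x \<in> tot G D P u"
proof -
  assume a: "inv G D" "P \<in> D" "x \<in> verts G"
  show ?thesis using bspec[OF inv_parts(5)[OF a(1)] a(2)] a(3) by blast
qed
lemma inv_adjG: "inv G D \<Longrightarrow> P \<in> D \<Longrightarrow> u \<in> verts P \<Longrightarrow> v \<in> verts P \<Longrightarrow> u \<noteq> v \<Longrightarrow>
   x \<in> tot G D P u \<Longrightarrow> y \<in> tot G D P v \<Longrightarrow>
   adj G x y \<longleftrightarrow> adj P u v \<and> x \<in> act G D P u \<and> y \<in> act G D P v"
proof -
  assume a: "inv G D" "P \<in> D" "u \<in> verts P" "v \<in> verts P" "u \<noteq> v" "x \<in> tot G D P u" "y \<in> tot G D P v"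
  have "\<forall>x\<in>tot G D P u. \<forall>y\<in>tot G D P v. adj G x y \<longleftrightarrow> adj P u v \<and> x \<in> act G D P u \<and> y \<in> act G D P v"
    using bspec[OF bspec[OF bspec[OF inv_parts(6)[OF a(1)] a(2)] a(3)] a(4)] a(5) by blast
  then show ?thesis using a(6,7) by blast
qed

locale step_ctx =
  fixes G :: "'a graph" and D :: "'a graph set" and H :: "'a graph" and V1 V2 :: "'a set" and m :: 'a
  assumes sg: "simple_graph G" and I: "inv G D" and HD: "H \<in> D" and S: "is_split H V1 V2"
    and mG: "m \<notin> verts G" and mD: "\<forall>Q\<in>D. m \<notin> verts Q"
begin

definition "H1 = decomp_part H V1 V2 m"
definition "H2 = decomp_part H V2 V1 m"
definition "D' = insert H1 (insert H2 (D - {H}))"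

lemma vH1: "verts H1 = insert m V1" by (simp add: H1_def decomp_part_def verts_def)
lemma vH2: "verts H2 = insert m V2" by (simp add: H2_def decomp_part_def verts_def)
lemma adjH1: "adj H1 x y \<longleftrightarrow> (x \<in> V1 \<and> y \<in> V1 \<and> adj H x y) \<or> (x = m \<and> y \<in> nbrs H V2) \<or> (y = m \<and> x \<in> nbrs H V2)"
  by (simp add: H1_def decomp_part_def adj_def)
lemma adjH2: "adj H2 x y \<longleftrightarrow> (x \<in> V2 \<and> y \<in> V2 \<and> adj H x y) \<or> (x = m \<and> y \<in> nbrs H V1) \<or> (y = m \<and> x \<in> nbrs H V1)"
  by (simp add: H2_def decomp_part_def adj_def)

lemma V12: "V1 \<union> V2 = verts H" "V1 \<inter> V2 = {}" "V1 \<noteq> {}" "V2 \<noteq> {}"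
  using S unfolding is_split_def by auto

lemma mH: "m \<notin> verts H" using mD HD by blast

lemma mV: "m \<notin> V1" "m \<notin> V2" using mH V12 by auto

lemma H1nD: "H1 \<notin> D" using mD vH1 by blast
lemma H2nD: "H2 \<notin> D" using mD vH2 by blast
lemma H12: "H1 \<noteq> H2"
proof
  assume "H1 = H2"
  then have "insert m V1 = insert m V2" using vH1 vH2 by simp
  then have "V1 = V2" using mV insert_ident by metis
  then show False using V12 by blast
qed
lemma HH: "H \<noteq> H1" "H \<noteq> H2" using H1nD H2nD HD by auto

lemma memD': "Q \<in> D' \<longleftrightarrow> Q = H1 \<or> Q = H2 \<or> (Q \<in> D \<and> Q \<noteq> H)"
  unfolding D'_def by blast

lemma H1D': "H1 \<in> D'" and H2D': "H2 \<in> D'" and oldD': "Q \<in> D \<Longrightarrow> Q \<noteq> H \<Longrightarrow> Q \<in> D'"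
  unfolding D'_def by auto

lemma D'_cases: "Q \<in> D' \<Longrightarrow> Q \<noteq> H1 \<Longrightarrow> Q \<noteq> H2 \<Longrightarrow> Q \<in> D \<and> Q \<noteq> H"
  unfolding D'_def by blast

lemma symH: "adj H x y \<Longrightarrow> adj H y x \<and> x \<in> verts H \<and> y \<in> verts H \<and> x \<noteq> y"
  using inv_adj[OF I HD] by blast

lemma nbrsH2: "u \<in> nbrs H V2 \<longleftrightarrow> u \<in> V1 \<and> (\<exists>w\<in>V2. adj H u w)"
  using symH V12 unfolding nbrs_def nbr_def by blast
lemma nbrsH1: "u \<in> nbrs H V1 \<longleftrightarrow> u \<in> V2 \<and> (\<exists>w\<in>V1. adj H u w)"
  using symH V12 unfolding nbrs_def nbr_def by blast

lemma S': "is_split H V2 V1"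
  using split_sym[OF S] symH by blast

lemma old_vert: "Q \<in> D \<Longrightarrow> w \<in> verts Q \<Longrightarrow> w \<noteq> m" using mD by blast

lemma new_verts_H: "w \<in> verts H1 \<Longrightarrow> w \<noteq> m \<Longrightarrow> w \<in> verts H"
  "w \<in> verts H2 \<Longrightarrow> w \<noteq> m \<Longrightarrow> w \<in> verts H"
  using vH1 vH2 V12 by auto

lemma H_verts_new: "w \<in> verts H \<Longrightarrow> w \<in> verts H1 \<or> w \<in> verts H2"
  using vH1 vH2 V12 by auto

lemma rel12: "P \<noteq> H1 \<Longrightarrow> P \<noteq> H2 \<Longrightarrow> (H1, H2) \<in> tree_rel_without D' P \<and> (H2, H1) \<in> tree_rel_without D' P"
  using H12 vH1 vH2 unfolding rel_iff memD' by auto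

end

lemma Reach_sub:
  assumes X: "X \<in> Reach D P u" "w \<in> verts X"
  shows "Reach D P w \<subseteq> Reach D P u"
proof
  fix R assume R: "R \<in> Reach D P w"
  have XD: "X \<in> D" "X \<noteq> P" using Reach_mem[OF X(1)] by auto
  show "R \<in> Reach D P u"
  proof (rule Reach_induct[where \<Phi>="\<lambda>R. R \<in> Reach D P u", OF R])
    fix Q assume Q: "Q \<in> D" "Q \<noteq> P" "w \<in> verts Q"
    show "Q \<in> Reach D P u"
    proof (cases "Q = X")
      case True then show ?thesis using X by simp
    next
      case False
      then have "(X, Q) \<in> tree_rel_without D P" using Q XD X(2) unfolding rel_iff by blast
      then show ?thesis by (rule Reach_step[OF X(1)])
    qed
  next
    fix A B assume "A \<in> Reach D P u" "(A, B) \<in> tree_rel_without D P"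
    then show "B \<in> Reach D P u" by (rule Reach_step)
  qed
qed

context step_ctx begin

lemma S1a:
  assumes P: "P \<in> D" "P \<noteq> H" "u \<in> verts P" and R: "R' \<in> Reach D' P u"
  shows "(R' \<in> D \<and> R' \<noteq> H \<and> R' \<in> Reach D P u) \<or> ((R' = H1 \<or> R' = H2) \<and> H \<in> Reach D P u)"
proof (rule Reach_induct[where \<Phi>="\<lambda>X. (X \<in> D \<and> X \<noteq> H \<and> X \<in> Reach D P u) \<or> ((X = H1 \<or> X = H2) \<and> H \<in> Reach D P u)", OF R])
  have um: "u \<noteq> m" using old_vert[OF P(1,3)] .
  have HP: "H \<noteq> P" using P(2) by simp
  fix Q assume Q: "Q \<in> D'" "Q \<noteq> P" "u \<in> verts Q"
  show "(Q \<in> D \<and> Q \<noteq> H \<and> Q \<in> Reach D P u) \<or> ((Q = H1 \<or> Q = H2) \<and> H \<in> Reach D P u)"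
  proof (cases "Q = H1 \<or> Q = H2")
    case True
    then have "u \<in> verts H" using Q(3) um new_verts_H by blast
    then have "H \<in> Reach D P u" using Reach_base[OF HD HP] by simp
    then show ?thesis using True by simp
  next
    case False
    then have "Q \<in> D" "Q \<noteq> H" using Q(1) memD' by auto
    then show ?thesis using Reach_base[OF _ Q(2,3)] by simp
  qed
next
  have HP: "H \<noteq> P" using P(2) by simp
  fix A B
  assume A: "(A \<in> D \<and> A \<noteq> H \<and> A \<in> Reach D P u) \<or> ((A = H1 \<or> A = H2) \<and> H \<in> Reach D P u)"
    and AB: "(A, B) \<in> tree_rel_without D' P"
  from AB have AB': "A \<in> D'" "B \<in> D'" "A \<noteq> P" "B \<noteq> P" "A \<noteq> B" "verts A \<inter> verts B \<noteq> {}"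
    unfolding rel_iff by auto
  then obtain w where w: "w \<in> verts A" "w \<in> verts B" by blast
  show "(B \<in> D \<and> B \<noteq> H \<and> B \<in> Reach D P u) \<or> ((B = H1 \<or> B = H2) \<and> H \<in> Reach D P u)"
  proof (cases "B = H1 \<or> B = H2")
    case Bnew: True
    show ?thesis
    proof (cases "A = H1 \<or> A = H2")
      case True then show ?thesis using A Bnew H1nD H2nD by auto
    next
      case False
      then have Aold: "A \<in> D" "A \<noteq> H" "A \<in> Reach D P u" using A by auto
      have "w \<noteq> m" using old_vert[OF Aold(1) w(1)] .
      then have "w \<in> verts H" using Bnew w(2) new_verts_H by blast
      then have "(A, H) \<in> tree_rel_without D P" using Aold w(1) AB'(3) HD HP unfolding rel_iff by blast
      then have "H \<in> Reach D P u" by (rule Reach_step[OF Aold(3)])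
      then show ?thesis using Bnew by simp
    qed
  next
    case False
    then have Bold: "B \<in> D" "B \<noteq> H" using AB'(2) memD' by auto
    have "w \<noteq> m" using old_vert[OF Bold(1) w(2)] .
    show ?thesis
    proof (cases "A = H1 \<or> A = H2")
      case True
      then have Hr: "H \<in> Reach D P u" using A H1nD H2nD by auto
      have "w \<in> verts H" using True w(1) \<open>w \<noteq> m\<close> new_verts_H by blast
      then have "(H, B) \<in> tree_rel_without D P" using Bold w(2) AB'(4) HD HP unfolding rel_iff by blast
      then have "B \<in> Reach D P u" by (rule Reach_step[OF Hr])
      then show ?thesis using Bold by simp
    next
      case False
      then have Aold: "A \<in> D" "A \<noteq> H" "A \<in> Reach D P u" using A by auto
      have "(A, B) \<in> tree_rel_without D P" using Aold Bold AB' unfolding rel_iff by blast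
      then have "B \<in> Reach D P u" by (rule Reach_step[OF Aold(3)])
      then show ?thesis using Bold by simp
    qed
  qed
qed

lemma both_new:
  assumes "P \<noteq> H1" "P \<noteq> H2" "H1 \<in> Reach D' P u \<or> H2 \<in> Reach D' P u"
  shows "H1 \<in> Reach D' P u \<and> H2 \<in> Reach D' P u"
  using assms rel12[OF assms(1,2)] Reach_step by metis

lemma S1b:
  assumes P: "P \<in> D" "P \<noteq> H" "u \<in> verts P" and R: "R \<in> Reach D P u"
  shows "(R \<noteq> H \<and> R \<in> Reach D' P u) \<or> (R = H \<and> H1 \<in> Reach D' P u \<and> H2 \<in> Reach D' P u)"
proof (rule Reach_induct[where \<Phi>="\<lambda>R. (R \<noteq> H \<and> R \<in> Reach D' P u) \<or> (R = H \<and> H1 \<in> Reach D' P u \<and> H2 \<in> Reach D' P u)", OF R])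
  have PH: "P \<noteq> H1" "P \<noteq> H2" using P(1) H1nD H2nD by auto
  fix Q assume Q: "Q \<in> D" "Q \<noteq> P" "u \<in> verts Q"
  show "(Q \<noteq> H \<and> Q \<in> Reach D' P u) \<or> (Q = H \<and> H1 \<in> Reach D' P u \<and> H2 \<in> Reach D' P u)"
  proof (cases "Q = H")
    case True
    then have "u \<in> verts H1 \<or> u \<in> verts H2" using Q(3) H_verts_new by blast
    then have "H1 \<in> Reach D' P u \<or> H2 \<in> Reach D' P u"
      using Reach_base[of H1 D' P u] Reach_base[of H2 D' P u] PH memD' by auto
    then show ?thesis using both_new[OF PH] True by simp
  next
    case False
    then have "Q \<in> D'" using Q memD' by simp
    then show ?thesis using Reach_base[OF _ Q(2,3)] False by simp
  qed
next
  have PH: "P \<noteq> H1" "P \<noteq> H2" using P(1) H1nD H2nD by auto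
  fix A B
  assume A: "(A \<noteq> H \<and> A \<in> Reach D' P u) \<or> (A = H \<and> H1 \<in> Reach D' P u \<and> H2 \<in> Reach D' P u)"
    and AB: "(A, B) \<in> tree_rel_without D P"
  from AB have AB': "A \<in> D" "B \<in> D" "A \<noteq> P" "B \<noteq> P" "A \<noteq> B" "verts A \<inter> verts B \<noteq> {}"
    unfolding rel_iff by auto
  then obtain w where w: "w \<in> verts A" "w \<in> verts B" by blast
  show "(B \<noteq> H \<and> B \<in> Reach D' P u) \<or> (B = H \<and> H1 \<in> Reach D' P u \<and> H2 \<in> Reach D' P u)"
  proof (cases "B = H")
    case True
    then have AH: "A \<noteq> H" "A \<in> Reach D' P u" using A AB'(5) by auto
    have AD': "A \<in> D'" using oldD' AB'(1) AH(1) by blast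
    have AHn: "A \<noteq> H1" "A \<noteq> H2" using AB'(1) H1nD H2nD by auto
    have "w \<in> verts H1 \<or> w \<in> verts H2" using H_verts_new True w(2) by blast
    then have "H1 \<in> Reach D' P u \<or> H2 \<in> Reach D' P u"
    proof
      assume "w \<in> verts H1"
      then have "(A, H1) \<in> tree_rel_without D' P" using AD' H1D' AB'(3) PH(1) AHn(1) w(1) unfolding rel_iff by blast
      then show ?thesis using Reach_step[OF AH(2)] by blast
    next
      assume "w \<in> verts H2"
      then have "(A, H2) \<in> tree_rel_without D' P" using AD' H2D' AB'(3) PH(2) AHn(2) w(1) unfolding rel_iff by blast
      then show ?thesis using Reach_step[OF AH(2)] by blast
    qed
    then show ?thesis using both_new[OF PH] True by simp
  next
    case False
    have BD': "B \<in> D'" using AB'(2) False oldD' by simp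
    have BH: "B \<noteq> H1" "B \<noteq> H2" using AB'(2) H1nD H2nD by auto
    show ?thesis
    proof (cases "A = H")
      case True
      then have HR: "H1 \<in> Reach D' P u" "H2 \<in> Reach D' P u" using A by auto
      have "w \<in> verts H1 \<or> w \<in> verts H2" using H_verts_new w(1) True by blast
      then have "B \<in> Reach D' P u"
      proof
        assume "w \<in> verts H1"
        then have "(H1, B) \<in> tree_rel_without D' P" using BD' H1D' AB'(4) PH(1) BH(1) w(2) unfolding rel_iff by blast
        then show ?thesis using Reach_step[OF HR(1)] by blast
      next
        assume "w \<in> verts H2"
        then have "(H2, B) \<in> tree_rel_without D' P" using BD' H2D' AB'(4) PH(2) BH(2) w(2) unfolding rel_iff by blast
        then show ?thesis using Reach_step[OF HR(2)] by blast
      qed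
      then show ?thesis using False by simp
    next
      case AF: False
      then have AR: "A \<in> Reach D' P u" "A \<in> D'" using A AB'(1) oldD' by auto
      have "(A, B) \<in> tree_rel_without D' P" using AB'(3-6) BD' AR(2) unfolding rel_iff by blast
      then have "B \<in> Reach D' P u" using Reach_step[OF AR(1)] by blast
      then show ?thesis using False by simp
    qed
  qed
qed

lemma S1:
  assumes P: "P \<in> D" "P \<noteq> H" "u \<in> verts P"
  shows "tot G D' P u = tot G D P u"
proof (cases "u \<in> verts G")
  case True then show ?thesis by (simp add: tot_alt)
next
  case False
  have "verts G \<inter> \<Union>(verts ` Reach D' P u) = verts G \<inter> \<Union>(verts ` Reach D P u)"
  proof (intro equalityI subsetI)
    fix x assume "x \<in> verts G \<inter> \<Union>(verts ` Reach D' P u)"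
    then obtain R' where x: "x \<in> verts G" "R' \<in> Reach D' P u" "x \<in> verts R'" by blast
    from S1a[OF P x(2)] show "x \<in> verts G \<inter> \<Union>(verts ` Reach D P u)"
    proof
      assume "R' \<in> D \<and> R' \<noteq> H \<and> R' \<in> Reach D P u" then show ?thesis using x by blast
    next
      assume a: "(R' = H1 \<or> R' = H2) \<and> H \<in> Reach D P u"
      have "x \<noteq> m" using x(1) mG by blast
      then have "x \<in> verts H" using a x(3) new_verts_H by blast
      then show ?thesis using a x(1) by blast
    qed
  next
    fix x assume "x \<in> verts G \<inter> \<Union>(verts ` Reach D P u)"
    then obtain R where x: "x \<in> verts G" "R \<in> Reach D P u" "x \<in> verts R" by blast
    from S1b[OF P x(2)] show "x \<in> verts G \<inter> \<Union>(verts ` Reach D' P u)"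
    proof
      assume "R \<noteq> H \<and> R \<in> Reach D' P u" then show ?thesis using x by blast
    next
      assume a: "R = H \<and> H1 \<in> Reach D' P u \<and> H2 \<in> Reach D' P u"
      then have "x \<in> verts H1 \<or> x \<in> verts H2" using x(3) H_verts_new by blast
      then show ?thesis using a x(1) by blast
    qed
  qed
  then show ?thesis using False by (simp add: tot_alt)
qed

end

context step_ctx begin

lemma Z:
  assumes u: "u \<in> verts H" "u \<notin> verts G" and X: "X \<in> Reach D H u" "w \<in> verts X" "w \<in> verts H"
  shows "w = u"
proof (rule ccontr)
  assume wu: "w \<noteq> u"
  have XD: "X \<in> D" "X \<noteq> H" using Reach_mem[OF X(1)] by auto
  show False
  proof (cases "w \<in> verts G")
    case True
    have "X = H" by (rule inv_uniq[OF I True XD(1) HD X(2,3)])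
    then show False using XD by simp
  next
    case False
    have "Reach D H w \<subseteq> Reach D H u" using Reach_sub[OF X(1,2)] .
    then have "tot G D H w \<subseteq> tot G D H u" using False u(2) by (auto simp: tot_alt)
    moreover have "tot G D H w \<noteq> {}" using inv_ne[OF I HD X(3)] .
    moreover have "tot G D H w \<inter> tot G D H u = {}" using inv_disj[OF I HD X(3) u(1) wu] .
    ultimately show False by blast
  qed
qed

lemma S2a:
  assumes u: "u \<in> V1" "u \<notin> verts G" and R: "R' \<in> Reach D' H1 u"
  shows "R' \<in> D \<and> R' \<noteq> H \<and> R' \<in> Reach D H u"
proof (rule Reach_induct[where \<Phi>="\<lambda>X. X \<in> D \<and> X \<noteq> H \<and> X \<in> Reach D H u", OF R])
  have uH: "u \<in> verts H" using u(1) V12(1) by auto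
  fix Q assume Q: "Q \<in> D'" "Q \<noteq> H1" "u \<in> verts Q"
  have "u \<notin> verts H2" using u(1) mV(1) V12(2) vH2 by auto
  then have "Q \<noteq> H2" using Q(3) by auto
  then have Qo: "Q \<in> D \<and> Q \<noteq> H" using D'_cases Q(1,2) by blast
  then show "Q \<in> D \<and> Q \<noteq> H \<and> Q \<in> Reach D H u" using Reach_base[of Q D H u] Q(3) by blast
next
  have uH: "u \<in> verts H" using u(1) V12(1) by auto
  fix A B assume A: "A \<in> D \<and> A \<noteq> H \<and> A \<in> Reach D H u" and AB: "(A, B) \<in> tree_rel_without D' H1"
  from AB have AB': "A \<in> D'" "B \<in> D'" "A \<noteq> H1" "B \<noteq> H1" "A \<noteq> B" "verts A \<inter> verts B \<noteq> {}"
    unfolding rel_iff by auto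
  then obtain w where w: "w \<in> verts A" "w \<in> verts B" by blast
  have "B \<noteq> H2"
  proof
    assume "B = H2"
    have "w \<noteq> m" using old_vert[of A w] w(1) A by blast
    then have "w \<in> V2" using w(2) \<open>B = H2\<close> vH2 by blast
    then have "w \<in> verts H" using V12(1) by auto
    then have "w = u" using Z[OF uH u(2) _ w(1)] A by simp
    then show False using \<open>w \<in> V2\<close> u(1) V12(2) by auto
  qed
  then have Bo: "B \<in> D" "B \<noteq> H" using AB'(2,4) D'_cases by auto
  have "(A, B) \<in> tree_rel_without D H" using A Bo AB'(5,6) unfolding rel_iff by blast
  then have "B \<in> Reach D H u" using Reach_step[of A D H u B] A by simp
  then show "B \<in> D \<and> B \<noteq> H \<and> B \<in> Reach D H u" using Bo by simp
qed

lemma S2b: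
  assumes R: "R \<in> Reach D H u"
  shows "R \<in> Reach D' H1 u"
proof (rule Reach_induct[where \<Phi>="\<lambda>X. X \<in> Reach D' H1 u", OF R])
  fix Q assume Q: "Q \<in> D" "Q \<noteq> H" "u \<in> verts Q"
  have "Q \<in> D'" "Q \<noteq> H1" using oldD'[OF Q(1,2)] H1nD Q(1) by auto
  then show "Q \<in> Reach D' H1 u" using Reach_base[OF _ _ Q(3)] by blast
next
  fix A B assume A: "A \<in> Reach D' H1 u" and AB: "(A, B) \<in> tree_rel_without D H"
  from AB have AB': "A \<in> D" "B \<in> D" "A \<noteq> H" "B \<noteq> H" "A \<noteq> B" "verts A \<inter> verts B \<noteq> {}"
    unfolding rel_iff by auto
  have "A \<in> D'" "B \<in> D'" "A \<noteq> H1" "B \<noteq> H1" using AB' oldD' H1nD by auto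
  then have "(A, B) \<in> tree_rel_without D' H1" using AB'(5,6) unfolding rel_iff by blast
  then show "B \<in> Reach D' H1 u" using Reach_step[OF A] by blast
qed

lemma S2:
  assumes u: "u \<in> V1"
  shows "tot G D' H1 u = tot G D H u"
proof (cases "u \<in> verts G")
  case True then show ?thesis by (simp add: tot_alt)
next
  case False
  have "Reach D' H1 u = Reach D H u"
    using S2a[OF u False] S2b by blast
  then show ?thesis using False by (simp add: tot_alt)
qed

lemma S3a:
  assumes R: "R' \<in> Reach D' H1 m"
  shows "R' = H2 \<or> (R' \<in> D \<and> R' \<noteq> H \<and> (\<exists>w\<in>V2. w \<notin> verts G \<and> R' \<in> Reach D H w))"
proof (rule Reach_induct[where \<Phi>="\<lambda>X. X = H2 \<or> (X \<in> D \<and> X \<noteq> H \<and> (\<exists>w\<in>V2. w \<notin> verts G \<and> X \<in> Reach D H w))", OF R])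
  fix Q assume Q: "Q \<in> D'" "Q \<noteq> H1" "m \<in> verts Q"
  have "Q \<notin> D" using Q(3) mD by blast
  then have "Q = H2" using Q(1,2) D'_cases by blast
  then show "Q = H2 \<or> (Q \<in> D \<and> Q \<noteq> H \<and> (\<exists>w\<in>V2. w \<notin> verts G \<and> Q \<in> Reach D H w))"
    by simp
next
  fix A B
  assume A: "A = H2 \<or> (A \<in> D \<and> A \<noteq> H \<and> (\<exists>w\<in>V2. w \<notin> verts G \<and> A \<in> Reach D H w))"
    and AB: "(A, B) \<in> tree_rel_without D' H1"
  from AB have AB': "A \<in> D'" "B \<in> D'" "A \<noteq> H1" "B \<noteq> H1" "A \<noteq> B" "verts A \<inter> verts B \<noteq> {}"
    unfolding rel_iff by auto
  then obtain w where w: "w \<in> verts A" "w \<in> verts B" by blast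
  show "B = H2 \<or> (B \<in> D \<and> B \<noteq> H \<and> (\<exists>w\<in>V2. w \<notin> verts G \<and> B \<in> Reach D H w))"
  proof (cases "B = H2")
    case True then show ?thesis by simp
  next
    case False
    then have Bo: "B \<in> D" "B \<noteq> H" using AB'(2,4) D'_cases by auto
    have wm: "w \<noteq> m" using old_vert[OF Bo(1) w(2)] .
    show ?thesis
    proof (cases "A = H2")
      case True
      then have wV2: "w \<in> V2" using w(1) wm vH2 by blast
      then have wH: "w \<in> verts H" using V12(1) by auto
      have "w \<notin> verts G"
      proof
        assume "w \<in> verts G"
        then have "B = H" using inv_uniq[OF I _ Bo(1) HD w(2) wH] by blast
        then show False using Bo by simp
      qed
      moreover have "B \<in> Reach D H w" using Reach_base[OF Bo(1) Bo(2) w(2)] .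
      ultimately show ?thesis using Bo wV2 by blast
    next
      case AF: False
      then obtain w0 where w0: "w0 \<in> V2" "w0 \<notin> verts G" "A \<in> Reach D H w0" and Ao: "A \<in> D" "A \<noteq> H"
        using A by blast
      have "(A, B) \<in> tree_rel_without D H" using Ao Bo AB'(5,6) unfolding rel_iff by blast
      then have "B \<in> Reach D H w0" using Reach_step[OF w0(3)] by blast
      then show ?thesis using Bo w0 by blast
    qed
  qed
qed

lemma H2_Reach: "H2 \<in> Reach D' H1 m"
  using Reach_base[OF H2D' H12[symmetric]] vH2 by blast

lemma S3b:
  assumes w: "w \<in> V2" and R: "R \<in> Reach D H w"
  shows "R \<in> Reach D' H1 m"
proof (rule Reach_induct[where \<Phi>="\<lambda>X. X \<in> Reach D' H1 m", OF R])
  fix Q assume Q: "Q \<in> D" "Q \<noteq> H" "w \<in> verts Q"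
  have QD': "Q \<in> D'" "Q \<noteq> H1" "Q \<noteq> H2" using oldD'[OF Q(1,2)] H1nD H2nD Q(1) by auto
  have "w \<in> verts H2" using w vH2 by blast
  then have "(H2, Q) \<in> tree_rel_without D' H1"
    using QD'(1,2) QD'(3)[symmetric] H2D' H12[symmetric] Q(3) unfolding rel_iff by blast
  then show "Q \<in> Reach D' H1 m" using Reach_step[OF H2_Reach] by blast
next
  fix A B assume A: "A \<in> Reach D' H1 m" and AB: "(A, B) \<in> tree_rel_without D H"
  from AB have AB': "A \<in> D" "B \<in> D" "A \<noteq> H" "B \<noteq> H" "A \<noteq> B" "verts A \<inter> verts B \<noteq> {}"
    unfolding rel_iff by auto
  have "A \<in> D'" "B \<in> D'" "A \<noteq> H1" "B \<noteq> H1" using AB' oldD' H1nD by auto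
  then have "(A, B) \<in> tree_rel_without D' H1" using AB'(5,6) unfolding rel_iff by blast
  then show "B \<in> Reach D' H1 m" using Reach_step[OF A] by blast
qed

lemma S3: "tot G D' H1 m = (\<Union>w\<in>V2. tot G D H w)"
proof -
  have "verts G \<inter> \<Union>(verts ` Reach D' H1 m) = (\<Union>w\<in>V2. tot G D H w)"
  proof (intro equalityI subsetI)
    fix x assume "x \<in> verts G \<inter> \<Union>(verts ` Reach D' H1 m)"
    then obtain R' where x: "x \<in> verts G" "R' \<in> Reach D' H1 m" "x \<in> verts R'" by blast
    from S3a[OF x(2)] show "x \<in> (\<Union>w\<in>V2. tot G D H w)"
    proof
      assume "R' = H2"
      then have "x \<in> V2" using x(1,3) vH2 mG by auto
      then show ?thesis using x(1) by (auto simp: tot_alt)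
    next
      assume "R' \<in> D \<and> R' \<noteq> H \<and> (\<exists>w\<in>V2. w \<notin> verts G \<and> R' \<in> Reach D H w)"
      then obtain w where "w \<in> V2" "w \<notin> verts G" "R' \<in> Reach D H w" by blast
      then show ?thesis using x by (auto simp: tot_alt)
    qed
  next
    fix x assume "x \<in> (\<Union>w\<in>V2. tot G D H w)"
    then obtain w where w: "w \<in> V2" "x \<in> tot G D H w" by blast
    show "x \<in> verts G \<inter> \<Union>(verts ` Reach D' H1 m)"
    proof (cases "w \<in> verts G")
      case True
      then have "x = w" using w(2) by (simp add: tot_alt)
      then have "x \<in> verts H2" using w(1) vH2 by blast
      then show ?thesis using H2_Reach True \<open>x = w\<close> by blast
    next
      case False
      then obtain R where R: "R \<in> Reach D H w" "x \<in> verts R" "x \<in> verts G" using w(2) by (auto simp: tot_alt)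
      then show ?thesis using S3b[OF w(1) R(1)] by blast
    qed
  qed
  then show ?thesis using mG by (simp add: tot_alt)
qed

end

definition pgood :: "'a graph \<Rightarrow> 'a graph set \<Rightarrow> 'a graph \<Rightarrow> bool" where
  "pgood G D P \<longleftrightarrow>
   (\<forall>u\<in>verts P. tot G D P u \<noteq> {}) \<and>
   (\<forall>u\<in>verts P. \<forall>v\<in>verts P. u \<noteq> v \<longrightarrow> tot G D P u \<inter> tot G D P v = {}) \<and>
   (verts G \<subseteq> (\<Union>u\<in>verts P. tot G D P u)) \<and>
   (\<forall>u\<in>verts P. \<forall>v\<in>verts P. u \<noteq> v \<longrightarrow>
      (\<forall>x\<in>tot G D P u. \<forall>y\<in>tot G D P v.
          adj G x y \<longleftrightarrow> adj P u v \<and> x \<in> act G D P u \<and> y \<in> act G D P v))"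

definition qgood :: "'a graph \<Rightarrow> bool" where
  "qgood Q \<longleftrightarrow> connected Q \<and> (\<forall>x y. adj Q x y \<longrightarrow> adj Q y x \<and> x \<in> verts Q \<and> y \<in> verts Q \<and> x \<noteq> y)"

lemma inv_iff: "inv G D \<longleftrightarrow> (\<forall>Q\<in>D. qgood Q) \<and>
   (\<forall>v\<in>verts G. \<forall>Q1\<in>D. \<forall>Q2\<in>D. v \<in> verts Q1 \<longrightarrow> v \<in> verts Q2 \<longrightarrow> Q1 = Q2) \<and>
   (\<forall>P\<in>D. pgood G D P)"
  unfolding inv_def pgood_def qgood_def by (simp add: ball_conj_distrib)

lemma pgood_cong:
  assumes "\<And>u. u \<in> verts P \<Longrightarrow> tot G D' P u = tot G D P u"
  shows "pgood G D' P = pgood G D P"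
proof -
  have "\<And>u. u \<in> verts P \<Longrightarrow> act G D' P u = act G D P u" using assms by (simp add: act_def)
  then show ?thesis unfolding pgood_def using assms by simp
qed

lemma sym_rtr: "(\<forall>x y. adj Q x y \<longrightarrow> adj Q y x) \<Longrightarrow> (a, b) \<in> {(u, v). adj Q u v}\<^sup>* \<Longrightarrow> (b, a) \<in> {(u, v). adj Q u v}\<^sup>*"
proof -
  assume s: "\<forall>x y. adj Q x y \<longrightarrow> adj Q y x" and ab: "(a, b) \<in> {(u, v). adj Q u v}\<^sup>*"
  have "sym {(u, v). adj Q u v}" using s unfolding sym_def by blast
  then have "sym ({(u, v). adj Q u v}\<^sup>*)" by (rule sym_rtrancl)
  then show ?thesis using ab unfolding sym_def by blast
qed

context step_ctx begin

lemma H1_adjprops: "adj H1 x y \<Longrightarrow> adj H1 y x \<and> x \<in> verts H1 \<and> y \<in> verts H1 \<and> x \<noteq> y"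
proof -
  assume a: "adj H1 x y"
  then consider (a) "x \<in> V1 \<and> y \<in> V1 \<and> adj H x y" | (b) "x = m \<and> y \<in> nbrs H V2" | (c) "y = m \<and> x \<in> nbrs H V2"
    using adjH1 by blast
  then show ?thesis
  proof cases
    case a then show ?thesis using symH[of x y] adjH1 vH1 by auto
  next
    case b then have "y \<in> V1" using nbrsH2 by blast
    then show ?thesis using b adjH1 vH1 mV by auto
  next
    case c then have "x \<in> V1" using nbrsH2 by blast
    then show ?thesis using c adjH1 vH1 mV by auto
  qed
qed

lemma H1_path:
  assumes "(x, z) \<in> {(u, v). adj H u v}\<^sup>*" "x \<in> V1"
  shows "(z \<in> V1 \<and> (x, z) \<in> {(u, v). adj H1 u v}\<^sup>*) \<or> (x, m) \<in> {(u, v). adj H1 u v}\<^sup>*"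
  using assms(1)
proof (induction rule: rtrancl_induct)
  case base then show ?case using assms(2) by simp
next
  case (step y z)
  from step.IH show ?case
  proof
    assume y: "y \<in> V1 \<and> (x, y) \<in> {(u, v). adj H1 u v}\<^sup>*"
    have yz: "adj H y z" using step(2) by simp
    then have "z \<in> verts H" using symH by blast
    then have "z \<in> V1 \<or> z \<in> V2" using V12(1) by auto
    then show ?thesis
    proof
      assume "z \<in> V1"
      then have "(y, z) \<in> {(u, v). adj H1 u v}" using y yz adjH1 by simp
      then show ?thesis using y \<open>z \<in> V1\<close> by (meson rtrancl.rtrancl_into_rtrancl)
    next
      assume "z \<in> V2"
      then have "y \<in> nbrs H V2" using nbrsH2 y yz by blast
      then have "(y, m) \<in> {(u, v). adj H1 u v}" using adjH1 by simp
      then show ?thesis using y by (meson rtrancl.rtrancl_into_rtrancl)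
    qed
  qed simp
qed

lemma H1_qgood: "qgood H1"
proof -
  have s: "\<forall>x y. adj H1 x y \<longrightarrow> adj H1 y x" using H1_adjprops by blast
  have HC: "connected H" using inv_conn[OF I HD] .
  obtain z where z: "z \<in> V2" using V12(4) by blast
  have zH: "z \<in> verts H" using z V12(1) by auto
  have xm: "(x, m) \<in> {(u, v). adj H1 u v}\<^sup>*" if x: "x \<in> V1" for x
  proof -
    have "x \<in> verts H" using x V12(1) by auto
    then have "(x, z) \<in> {(u, v). adj H u v}\<^sup>*" using HC zH unfolding connected_def by blast
    from H1_path[OF this x] show ?thesis using z V12(2) by blast
  qed
  have mx: "(m, x) \<in> {(u, v). adj H1 u v}\<^sup>*" if x: "x \<in> V1" for x
    using sym_rtr[OF s xm[OF x]] .
  have "\<forall>x\<in>verts H1. \<forall>y\<in>verts H1. (x, y) \<in> {(u, v). adj H1 u v}\<^sup>*"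
  proof (intro ballI)
    fix x y assume "x \<in> verts H1" "y \<in> verts H1"
    then have "x = m \<or> x \<in> V1" "y = m \<or> y \<in> V1" using vH1 by auto
    then have "(x, m) \<in> {(u, v). adj H1 u v}\<^sup>*" "(m, y) \<in> {(u, v). adj H1 u v}\<^sup>*"
      using xm mx by auto
    then show "(x, y) \<in> {(u, v). adj H1 u v}\<^sup>*" by (rule rtrancl_trans)
  qed
  moreover have "verts H1 \<noteq> {}" using vH1 by simp
  ultimately show ?thesis unfolding qgood_def connected_def using H1_adjprops by blast
qed

lemma act2: "u \<in> V1 \<Longrightarrow> act G D' H1 u = act G D H u"
  by (simp add: act_def S2)

lemma act3: "act G D' H1 m = nbrs G (verts G - (\<Union>w\<in>V2. tot G D H w))"
  by (simp add: act_def S3)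

lemma disjV1V2: "u \<in> V1 \<Longrightarrow> w \<in> V2 \<Longrightarrow> tot G D H u \<inter> tot G D H w = {}"
proof -
  assume "u \<in> V1" "w \<in> V2"
  moreover then have "u \<noteq> w" "u \<in> verts H" "w \<in> verts H" using V12 by auto
  ultimately show ?thesis using inv_disj[OF I HD] by blast
qed

lemma H1_adj_m:
  assumes u: "u \<in> V1" and x: "x \<in> tot G D H u" and y: "y \<in> (\<Union>w\<in>V2. tot G D H w)"
  shows "adj G x y \<longleftrightarrow> adj H1 u m \<and> x \<in> act G D H u \<and> y \<in> nbrs G (verts G - (\<Union>w\<in>V2. tot G D H w))"
proof -
  let ?S = "\<Union>w\<in>V2. tot G D H w"
  obtain w where w: "w \<in> V2" "y \<in> tot G D H w" using y by blast
  have uH: "u \<in> verts H" "w \<in> verts H" "u \<noteq> w" using u w V12 by auto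
  have xV: "x \<in> verts G" "y \<in> verts G" using subsetD[OF tot_sub x] subsetD[OF tot_sub w(2)] by simp_all
  have xS: "x \<notin> ?S" using disjV1V2[OF u] x by blast
  have sG: "\<And>a b. adj G a b \<Longrightarrow> adj G b a" using sg unfolding simple_graph_def by blast
  show ?thesis
  proof
    assume a: "adj G x y"
    then have h: "adj H u w \<and> x \<in> act G D H u \<and> y \<in> act G D H w"
      using inv_adjG[OF I HD uH(1,2,3) x w(2)] by blast
    then have "u \<in> nbrs H V2" using nbrsH2 u w(1) by blast
    then have "adj H1 u m" using adjH1 by simp
    moreover have "y \<in> nbrs G (verts G - ?S)"
      using nbrs_iff[OF sg] xV xS sG[OF a] y by blast
    ultimately show "adj H1 u m \<and> x \<in> act G D H u \<and> y \<in> nbrs G (verts G - ?S)" using h by blast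
  next
    assume a: "adj H1 u m \<and> x \<in> act G D H u \<and> y \<in> nbrs G (verts G - ?S)"
    then have "u \<in> nbrs H V2" using adjH1 mV by auto
    then obtain w0 where w0: "w0 \<in> V2" "adj H u w0" using nbrsH2 by blast
    obtain z where z: "z \<in> verts G - ?S" "adj G y z" using a nbrs_iff[OF sg] by blast
    obtain u' where u': "u' \<in> verts H" "z \<in> tot G D H u'" using inv_cov[OF I HD] z(1) by blast
    have "u' \<notin> V2" using u' z(1) by blast
    then have u'1: "u' \<in> V1" using u'(1) V12(1) by auto
    have "w \<noteq> u'" using u'1 w(1) V12(2) by auto
    then have h2: "adj H w u' \<and> y \<in> act G D H w" using inv_adjG[OF I HD uH(2) u'(1) _ w(2) u'(2)] z(2) by blast
    then have "adj H u w" using split_complete[OF S _ u w(1) w0 u'1] symH by blast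
    then show "adj G x y" using inv_adjG[OF I HD uH(1,2,3) x w(2)] a h2 by blast
  qed
qed

end

context step_ctx begin

lemma H1_pgood: "pgood G D' H1"
proof -
  let ?S = "\<Union>w\<in>V2. tot G D H w"
  have T1: "\<And>u. u \<in> V1 \<Longrightarrow> tot G D' H1 u = tot G D H u" using S2 by blast
  have Tm: "tot G D' H1 m = ?S" using S3 .
  have sG: "\<And>a b. adj G a b \<Longrightarrow> adj G b a" using sg unfolding simple_graph_def by blast
  have V1H: "\<And>u. u \<in> V1 \<Longrightarrow> u \<in> verts H" using V12(1) by auto
  have V2H: "\<And>u. u \<in> V2 \<Longrightarrow> u \<in> verts H" using V12(1) by auto
  have ne: "\<forall>u\<in>verts H1. tot G D' H1 u \<noteq> {}"
  proof
    fix u assume "u \<in> verts H1"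
    then have "u = m \<or> u \<in> V1" using vH1 by auto
    then show "tot G D' H1 u \<noteq> {}"
    proof
      assume "u = m"
      obtain w where w: "w \<in> V2" using V12(4) by blast
      then have "tot G D H w \<noteq> {}" using inv_ne[OF I HD V2H[OF w]] by blast
      then show ?thesis using \<open>u = m\<close> Tm w by blast
    next
      assume u: "u \<in> V1"
      then show ?thesis using T1 inv_ne[OF I HD V1H[OF u]] by simp
    qed
  qed
  have dj: "\<forall>u\<in>verts H1. \<forall>v\<in>verts H1. u \<noteq> v \<longrightarrow> tot G D' H1 u \<inter> tot G D' H1 v = {}"
  proof (intro ballI impI)
    fix u v assume uv: "u \<in> verts H1" "v \<in> verts H1" "u \<noteq> v"
    then have "u = m \<or> u \<in> V1" "v = m \<or> v \<in> V1" using vH1 by auto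
    then consider (a) "u \<in> V1" "v \<in> V1" | (b) "u = m" "v \<in> V1" | (c) "u \<in> V1" "v = m"
      using uv(3) by blast
    then show "tot G D' H1 u \<inter> tot G D' H1 v = {}"
    proof cases
      case a then show ?thesis using T1 inv_disj[OF I HD V1H V1H uv(3)] by simp
    next
      case b then show ?thesis using T1 Tm disjV1V2 by blast
    next
      case c then show ?thesis using T1 Tm disjV1V2 by blast
    qed
  qed
  have cv: "verts G \<subseteq> (\<Union>u\<in>verts H1. tot G D' H1 u)"
  proof
    fix x assume x: "x \<in> verts G"
    obtain u where u: "u \<in> verts H" "x \<in> tot G D H u" using inv_cov[OF I HD x] by blast
    then have "u \<in> V1 \<or> u \<in> V2" using V12(1) by auto
    then show "x \<in> (\<Union>u\<in>verts H1. tot G D' H1 u)"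
    proof
      assume "u \<in> V1" then show ?thesis using u T1 vH1 by auto
    next
      assume "u \<in> V2" then show ?thesis using u Tm vH1 by auto
    qed
  qed
  have ad: "\<forall>u\<in>verts H1. \<forall>v\<in>verts H1. u \<noteq> v \<longrightarrow>
      (\<forall>x\<in>tot G D' H1 u. \<forall>y\<in>tot G D' H1 v.
          adj G x y \<longleftrightarrow> adj H1 u v \<and> x \<in> act G D' H1 u \<and> y \<in> act G D' H1 v)"
  proof (intro ballI impI)
    fix u v x y assume uv: "u \<in> verts H1" "v \<in> verts H1" "u \<noteq> v"
      and x: "x \<in> tot G D' H1 u" and y: "y \<in> tot G D' H1 v"
    then have "u = m \<or> u \<in> V1" "v = m \<or> v \<in> V1" using vH1 by auto
    then consider (a) "u \<in> V1" "v \<in> V1" | (b) "u = m" "v \<in> V1" | (c) "u \<in> V1" "v = m"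
      using uv(3) by blast
    then show "adj G x y \<longleftrightarrow> adj H1 u v \<and> x \<in> act G D' H1 u \<and> y \<in> act G D' H1 v"
    proof cases
      case a
      have "adj H1 u v = adj H u v" using a adjH1 mV by auto
      then show ?thesis using inv_adjG[OF I HD V1H[OF a(1)] V1H[OF a(2)] uv(3)] x y T1 act2 a by simp
    next
      case b
      have x': "x \<in> ?S" using x b Tm by simp
      have y': "y \<in> tot G D H v" using y b T1 by simp
      have "adj G y x \<longleftrightarrow> adj H1 v m \<and> y \<in> act G D H v \<and> x \<in> nbrs G (verts G - ?S)"
        using H1_adj_m[OF b(2) y' x'] .
      moreover have "adj H1 v m = adj H1 m v" using adjH1 mV by auto
      moreover have "adj G y x = adj G x y" using sG by blast
      ultimately show ?thesis using b act2 act3 by auto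
    next
      case c
      have y': "y \<in> ?S" using y c Tm by simp
      have x': "x \<in> tot G D H u" using x c T1 by simp
      show ?thesis using H1_adj_m[OF c(1) x' y'] c act2 act3 by auto
    qed
  qed
  show ?thesis unfolding pgood_def using ne dj cv ad by blast
qed

lemma sw: "step_ctx G D H V2 V1 m"
  by (rule step_ctx.intro) (simp_all add: sg I HD S' mG mD)

lemma inv_D': "inv G D'"
proof -
  interpret sw: step_ctx G D H V2 V1 m by (rule sw)
  have swH: "sw.H1 = H2" "sw.H2 = H1" by (simp_all add: sw.H1_def sw.H2_def H1_def H2_def)
  have swD: "sw.D' = D'" unfolding sw.D'_def D'_def swH by (rule insert_commute)
  have I': "(\<forall>Q\<in>D. qgood Q) \<and>
   (\<forall>v\<in>verts G. \<forall>Q1\<in>D. \<forall>Q2\<in>D. v \<in> verts Q1 \<longrightarrow> v \<in> verts Q2 \<longrightarrow> Q1 = Q2) \<and>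
   (\<forall>P\<in>D. pgood G D P)" using I[unfolded inv_iff] .
  have Iq: "\<forall>Q\<in>D. qgood Q" using I' by (rule conjunct1)
  have Ip: "\<forall>P\<in>D. pgood G D P" using I' by (elim conjE)
  have q: "\<forall>Q\<in>D'. qgood Q"
  proof
    fix Q assume Q: "Q \<in> D'"
    show "qgood Q"
    proof (cases "Q = H1")
      case True then show ?thesis using H1_qgood by simp
    next
      case False
      show ?thesis
      proof (cases "Q = H2")
        case True then show ?thesis using sw.H1_qgood swH by simp
      next
        case False
        then have "Q \<in> D" using Q \<open>Q \<noteq> H1\<close> D'_cases by blast
        then show ?thesis using Iq by (rule bspec[rotated])
      qed
    qed
  qed
  have inH: "\<And>v Q. v \<in> verts G \<Longrightarrow> Q \<in> D' \<Longrightarrow> v \<in> verts Q \<Longrightarrow>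
              (Q = H1 \<and> v \<in> V1) \<or> (Q = H2 \<and> v \<in> V2) \<or> (Q \<in> D \<and> Q \<noteq> H)"
  proof -
    fix v Q assume a: "v \<in> verts G" "Q \<in> D'" "v \<in> verts Q"
    have "v \<noteq> m" using a(1) mG by blast
    show "(Q = H1 \<and> v \<in> V1) \<or> (Q = H2 \<and> v \<in> V2) \<or> (Q \<in> D \<and> Q \<noteq> H)"
    proof (cases "Q = H1 \<or> Q = H2")
      case True then show ?thesis using a(3) \<open>v \<noteq> m\<close> vH1 vH2 by auto
    next
      case False then show ?thesis using a(2) D'_cases by blast
    qed
  qed
  have u: "\<forall>v\<in>verts G. \<forall>Q1\<in>D'. \<forall>Q2\<in>D'. v \<in> verts Q1 \<longrightarrow> v \<in> verts Q2 \<longrightarrow> Q1 = Q2"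
  proof (intro ballI impI)
    fix v Q1 Q2 assume a: "v \<in> verts G" "Q1 \<in> D'" "Q2 \<in> D'" "v \<in> verts Q1" "v \<in> verts Q2"
    have vH: "v \<in> V1 \<Longrightarrow> v \<in> verts H" "v \<in> V2 \<Longrightarrow> v \<in> verts H" using V12(1) by auto
    have dj: "v \<in> V1 \<Longrightarrow> v \<in> V2 \<Longrightarrow> False" using V12(2) by auto
    have o: "\<And>Q. Q \<in> D \<Longrightarrow> Q \<noteq> H \<Longrightarrow> v \<in> verts Q \<Longrightarrow> v \<in> verts H \<Longrightarrow> False"
      using inv_uniq[OF I a(1) _ HD] by blast
    from inH[OF a(1,2,4)] show "Q1 = Q2"
    proof (elim disjE conjE)
      assume q1: "Q1 = H1" "v \<in> V1"
      from inH[OF a(1,3,5)] show "Q1 = Q2"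
      proof (elim disjE conjE)
        assume "Q2 = H1" then show ?thesis using q1 by simp
      next
        assume "Q2 = H2" "v \<in> V2" then show ?thesis using q1 dj by blast
      next
        assume "Q2 \<in> D" "Q2 \<noteq> H" then show ?thesis using o[of Q2] a(5) vH(1)[OF q1(2)] by blast
      qed
    next
      assume q1: "Q1 = H2" "v \<in> V2"
      from inH[OF a(1,3,5)] show "Q1 = Q2"
      proof (elim disjE conjE)
        assume "Q2 = H2" then show ?thesis using q1 by simp
      next
        assume "Q2 = H1" "v \<in> V1" then show ?thesis using q1 dj by blast
      next
        assume "Q2 \<in> D" "Q2 \<noteq> H" then show ?thesis using o[of Q2] a(5) vH(2)[OF q1(2)] by blast
      qed
    next
      assume q1: "Q1 \<in> D" "Q1 \<noteq> H"
      from inH[OF a(1,3,5)] show "Q1 = Q2"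
      proof (elim disjE conjE)
        assume "Q2 = H1" "v \<in> V1" then show ?thesis using o[OF q1 a(4)] vH(1) by blast
      next
        assume "Q2 = H2" "v \<in> V2" then show ?thesis using o[OF q1 a(4)] vH(2) by blast
      next
        assume "Q2 \<in> D" "Q2 \<noteq> H" then show ?thesis using inv_uniq[OF I a(1) q1(1) _ a(4) a(5)] by blast
      qed
    qed
  qed
  have p: "\<forall>P\<in>D'. pgood G D' P"
  proof
    fix P assume P: "P \<in> D'"
    show "pgood G D' P"
    proof (cases "P = H1")
      case True then show ?thesis using H1_pgood by simp
    next
      case False
      show ?thesis
      proof (cases "P = H2")
        case True then show ?thesis using sw.H1_pgood swH swD by simp
      next
        case False
        then have Po: "P \<in> D" "P \<noteq> H" using P \<open>P \<noteq> H1\<close> D'_cases by auto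
        have "pgood G D' P = pgood G D P" using S1[OF Po] by (rule pgood_cong)
        then show ?thesis using bspec[OF Ip Po(1)] by simp
      qed
    qed
  qed
  show ?thesis unfolding inv_iff by (rule conjI[OF q conjI[OF u p]])
qed

end

lemma inv_base:
  assumes sg: "simple_graph G" and c: "connected G"
  shows "inv G {G}"
proof -
  have T: "\<And>u. u \<in> verts G \<Longrightarrow> tot G {G} G u = {u}" by (simp add: tot_alt)
  have sG: "\<And>a b. adj G a b \<Longrightarrow> adj G b a \<and> a \<in> verts G \<and> b \<in> verts G \<and> a \<noteq> b"
    using sg unfolding simple_graph_def by blast
  have q: "qgood G" unfolding qgood_def using c sG by blast
  have p: "pgood G {G} G"
    unfolding pgood_def
  proof (intro conjI ballI impI)
    fix u assume "u \<in> verts G" then show "tot G {G} G u \<noteq> {}" using T by simp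
  next
    fix u v assume "u \<in> verts G" "v \<in> verts G" "u \<noteq> v"
    then show "tot G {G} G u \<inter> tot G {G} G v = {}" using T by simp
  next
    show "verts G \<subseteq> (\<Union>u\<in>verts G. tot G {G} G u)" using T by auto
  next
    fix u v x y assume uv: "u \<in> verts G" "v \<in> verts G" "u \<noteq> v"
      and x: "x \<in> tot G {G} G u" and y: "y \<in> tot G {G} G v"
    have xy: "x = u" "y = v" using x y T uv by auto
    show "adj G x y \<longleftrightarrow> adj G u v \<and> x \<in> act G {G} G u \<and> y \<in> act G {G} G v"
    proof
      assume a: "adj G x y"
      then have "u \<in> act G {G} G u" "v \<in> act G {G} G v"
        unfolding act_def using nbrs_iff[OF sg] T uv xy sG[OF a] by auto
      then show "adj G u v \<and> x \<in> act G {G} G u \<and> y \<in> act G {G} G v" using a xy by simp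
    qed (simp add: xy)
  qed
  show ?thesis unfolding inv_iff using q p by auto
qed

lemma split_dec_inv:
  assumes sg: "simple_graph G" and D: "split_dec G D"
  shows "inv G D"
  using D
proof (induction rule: split_dec.induct)
  case base
  then show ?case using inv_base[OF sg] by blast
next
  case (step D H V1 V2 m)
  interpret s: step_ctx G D H V1 V2 m
    by (rule step_ctx.intro) (use step sg in auto)
  show ?case using s.inv_D' unfolding s.D'_def s.H1_def s.H2_def .
qed

lemma split_dec_conn: "split_dec G D \<Longrightarrow> connected G"
  by (induction rule: split_dec.induct) auto

lemma mm_ge:
  assumes fin: "finite (verts G)" and S: "S \<subseteq> A" "S' \<subseteq> verts G - A" "card S \<ge> k" "card S' \<ge> k"
    and adjS: "\<forall>s\<in>S. \<forall>s'\<in>S'. adj G s s'" and SV: "A \<subseteq> verts G"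
  shows "mm G A \<ge> k"
proof -
  obtain S0 where S0: "S0 \<subseteq> S" "card S0 = k" "finite S0" using obtain_subset_with_card_n[OF S(3)] by metis
  obtain S1 where S1: "S1 \<subseteq> S'" "card S1 = k" "finite S1" using obtain_subset_with_card_n[OF S(4)] by metis
  obtain h where h: "bij_betw h S0 S1" using finite_same_card_bij[OF S0(3) S1(3)] S0(2) S1(2) by auto
  define M where "M = (\<lambda>s. (s, h s)) ` S0"
  define X where "X = {(a, b). a \<in> A \<and> b \<in> verts G - A \<and> adj G a b}"
  have hS: "\<And>s. s \<in> S0 \<Longrightarrow> h s \<in> S'" using h S1(1) unfolding bij_betw_def by blast
  have MX: "M \<subseteq> X"
  proof
    fix p assume "p \<in> M"
    then obtain s where s: "s \<in> S0" "p = (s, h s)" unfolding M_def by blast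
    have "s \<in> S" using s S0(1) by blast
    moreover have "h s \<in> S'" using hS s(1) .
    ultimately have "s \<in> A" "h s \<in> verts G - A" "adj G s (h s)" using S(1,2) adjS by blast+
    then show "p \<in> X" unfolding X_def using s(2) by simp
  qed
  have i1: "inj_on fst M" unfolding M_def by (rule inj_onI) auto
  have i2: "inj_on snd M" unfolding M_def using h unfolding bij_betw_def inj_on_def by auto
  have cM: "card M = k" unfolding M_def using S0(2) by (subst card_image) (auto intro: inj_onI)
  have XV: "X \<subseteq> verts G \<times> verts G" unfolding X_def using SV S by auto
  have "X \<subseteq> verts G \<times> verts G" using XV .
  then have fX: "finite X" using fin finite_subset by blast
  have fin2: "finite {card M | M. M \<subseteq> X \<and> inj_on fst M \<and> inj_on snd M}"
  proof -
    have "{card M | M. M \<subseteq> X \<and> inj_on fst M \<and> inj_on snd M} \<subseteq> card ` Pow X" by blast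
    then show ?thesis using fX finite_subset by blast
  qed
  have "card M \<in> {card M | M. M \<subseteq> X \<and> inj_on fst M \<and> inj_on snd M}" using MX i1 i2 by blast
  then have "card M \<le> Max {card M | M. M \<subseteq> X \<and> inj_on fst M \<and> inj_on snd M}"
    using fin2 by (rule Max_ge[rotated])
  then show ?thesis unfolding mm_def X_def[symmetric] using cM by simp
qed

lemma act_ne:
  assumes sg: "simple_graph G" and cG: "connected G" and I: "inv G D" and P: "P \<in> D"
    and uv: "u \<in> verts P" "v \<in> verts P" "u \<noteq> v"
  shows "act G D P u \<noteq> {}"
proof -
  let ?T = "tot G D P u"
  obtain t where t: "t \<in> ?T" using inv_ne[OF I P uv(1)] by blast
  obtain s where s: "s \<in> tot G D P v" using inv_ne[OF I P uv(2)] by blast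
  have sT: "s \<notin> ?T" using inv_disj[OF I P uv] s by blast
  have tV: "t \<in> verts G" "s \<in> verts G" using subsetD[OF tot_sub t] subsetD[OF tot_sub s] by simp_all
  have "(s, t) \<in> {(a, b). adj G a b}\<^sup>*" using cG tV unfolding connected_def by blast
  then have "t \<in> ?T \<longrightarrow> (\<exists>a b. a \<notin> ?T \<and> b \<in> ?T \<and> adj G a b)"
  proof (induction rule: rtrancl_induct)
    case base then show ?case using sT by simp
  next
    case (step y z)
    show ?case
    proof
      assume z: "z \<in> ?T"
      show "\<exists>a b. a \<notin> ?T \<and> b \<in> ?T \<and> adj G a b"
      proof (cases "y \<in> ?T")
        case True then show ?thesis using step.IH by blast
      next
        case False then show ?thesis using z step(2) by blast
      qed
    qed
  qed
  then obtain a b' where ab: "a \<notin> ?T" "b' \<in> ?T" "adj G a b'" using t by blast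
  have "adj G b' a \<and> a \<in> verts G \<and> b' \<in> verts G" using sg ab(3) unfolding simple_graph_def by blast
  then have "b' \<in> nbrs G (verts G - ?T)" using nbrs_iff[OF sg] ab by blast
  then show ?thesis unfolding act_def by blast
qed

lemma split_from_reps:
  assumes sg: "simple_graph G" and I: "inv G D" and PD: "P \<in> D"
    and sp: "is_split G A (verts G - A)"
    and r: "\<forall>v\<in>verts P. r v \<in> act G D P v"
    and p: "p1 \<in> verts P" "p2 \<in> verts P" "p1 \<noteq> p2" "r p1 \<in> A" "r p2 \<in> A"
    and q: "q1 \<in> verts P" "q2 \<in> verts P" "q1 \<noteq> q2" "r q1 \<notin> A" "r q2 \<notin> A"
    and fin: "finite (verts P)"
  shows "is_split P {v\<in>verts P. r v \<in> A} {v\<in>verts P. r v \<notin> A}"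
proof -
  let ?P1 = "{v\<in>verts P. r v \<in> A}"
  let ?P2 = "{v\<in>verts P. r v \<notin> A}"
  have rT: "r v \<in> tot G D P v" if "v \<in> verts P" for v using subsetD[OF act_sub bspec[OF r that]] .
  have rV: "r v \<in> verts G" if "v \<in> verts P" for v using subsetD[OF tot_sub rT[OF that]] .
  have key: "w \<in> nbr P x \<longleftrightarrow> r w \<in> nbr G (r x)" if x: "x \<in> ?P1" and w: "w \<in> ?P2" for x w
  proof -
    have xw: "x \<noteq> w" using x w by auto
    have "adj G (r x) (r w) \<longleftrightarrow> adj P x w"
      using inv_adjG[OF I PD _ _ xw rT rT] x w r by auto
    then show ?thesis unfolding nbr_def using w rV by auto
  qed
  have incl: "nbr P x \<inter> ?P2 \<subseteq> nbr P y \<inter> ?P2"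
    if x: "x \<in> ?P1" and y: "y \<in> ?P1" and nx: "nbr P x \<inter> ?P2 \<noteq> {}" and ny: "nbr P y \<inter> ?P2 \<noteq> {}" for x y
  proof
    fix w assume w: "w \<in> nbr P x \<inter> ?P2"
    obtain w1 where w1: "w1 \<in> nbr P x \<inter> ?P2" using nx by blast
    obtain w2 where w2: "w2 \<in> nbr P y \<inter> ?P2" using ny by blast
    have rw1: "r w1 \<in> nbr G (r x) \<inter> (verts G - A)" using key[OF x] w1 rV by auto
    have rw2: "r w2 \<in> nbr G (r y) \<inter> (verts G - A)" using key[OF y] w2 rV by auto
    have "r x \<in> A" "r y \<in> A" using x y by auto
    then have eq: "nbr G (r x) \<inter> (verts G - A) = nbr G (r y) \<inter> (verts G - A)"
      using sp rw1 rw2 unfolding is_split_def by blast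
    have "r w \<in> nbr G (r x) \<inter> (verts G - A)" using key[OF x] w rV by auto
    then have "r w \<in> nbr G (r y)" using eq by blast
    then show "w \<in> nbr P y \<inter> ?P2" using key[OF y] w by blast
  qed
  have c1: "card ?P1 \<ge> 2"
  proof -
    have "{p1, p2} \<subseteq> ?P1" using p by auto
    moreover have "finite ?P1" using fin by simp
    ultimately have "card {p1, p2} \<le> card ?P1" by (rule card_mono[rotated])
    then show ?thesis using p(3) by simp
  qed
  have c2: "card ?P2 \<ge> 2"
  proof -
    have "{q1, q2} \<subseteq> ?P2" using q by auto
    moreover have "finite ?P2" using fin by simp
    ultimately have "card {q1, q2} \<le> card ?P2" by (rule card_mono[rotated])
    then show ?thesis using q(3) by simp
  qed
  have "connected P" using inv_conn[OF I PD] .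
  moreover have "?P1 \<union> ?P2 = verts P" "?P1 \<inter> ?P2 = {}" by auto
  moreover have "\<forall>x\<in>?P1. \<forall>y\<in>?P1. nbr P x \<inter> ?P2 \<noteq> {} \<and> nbr P y \<inter> ?P2 \<noteq> {} \<longrightarrow>
        nbr P x \<inter> ?P2 = nbr P y \<inter> ?P2"
    using incl by (meson subset_antisym)
  ultimately show ?thesis unfolding is_split_def using c1 c2 by blast
qed

lemma two_elems:
  assumes "finite X" "card X \<ge> 2"
  shows "\<exists>a b. a \<in> X \<and> b \<in> X \<and> a \<noteq> b"
proof (rule ccontr)
  assume "\<not> ?thesis"
  then have "\<forall>a\<in>X. \<forall>b\<in>X. a = b" by blast
  then have "card X \<le> Suc 0" using assms(1) card_le_Suc0_iff_eq by blast
  then show False using assms(2) by simp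
qed

lemma ex3I: "a1 \<in> SA \<Longrightarrow> a3 \<in> SB \<Longrightarrow> a4 \<in> SB \<Longrightarrow> a3 \<noteq> a4 \<Longrightarrow> a1 \<noteq> a3 \<Longrightarrow> a1 \<noteq> a4 \<Longrightarrow>
   \<exists>a1\<in>SA. \<exists>a3\<in>SB. \<exists>a4\<in>SB. a3 \<noteq> a4 \<and> a1 \<noteq> a3 \<and> a1 \<noteq> a4"
  by (rule bexI[of _ a1], rule bexI[of _ a3], rule bexI[of _ a4]) simp_all

lemma pick3:
  assumes f: "finite SA" "finite SB" and c: "card SA \<ge> 2" "card SB \<ge> 2"
    and n: "\<not> (SA \<subseteq> SB \<and> card SB \<le> 2)"
  shows "\<exists>a1\<in>SA. \<exists>a3\<in>SB. \<exists>a4\<in>SB. a3 \<noteq> a4 \<and> a1 \<noteq> a3 \<and> a1 \<noteq> a4"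
proof (cases "card SB \<ge> 3")
  case True
  have "SA \<noteq> {}" using c(1) by auto
  then obtain a1 where a1: "a1 \<in> SA" by blast
  have "card SB - card {a1} \<le> card (SB - {a1})" by (rule diff_card_le_card_Diff) simp
  then have "card (SB - {a1}) \<ge> card SB - 1" by simp
  then have "card (SB - {a1}) \<ge> 2" using True by simp
  moreover have "finite (SB - {a1})" using f(2) by simp
  ultimately obtain a3 a4 where a34: "a3 \<in> SB - {a1}" "a4 \<in> SB - {a1}" "a3 \<noteq> a4"
    using two_elems by blast
  show ?thesis apply (rule ex3I[OF a1, of a3 SB a4]) using a34 by auto
next
  case False
  then have "\<not> SA \<subseteq> SB" using n by simp
  then obtain a1 where a1: "a1 \<in> SA" "a1 \<notin> SB" by blast
  obtain a3 a4 where a34: "a3 \<in> SB" "a4 \<in> SB" "a3 \<noteq> a4"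
    using two_elems[OF f(2) c(2)] by blast
  show ?thesis apply (rule ex3I[OF a1(1), of a3 SB a4]) using a34 a1 by auto
qed

lemma make_r:
  assumes ne: "\<forall>v\<in>verts P. F v \<noteq> {}"
    and c: "c1 \<noteq> c2" "c1 \<noteq> c3" "c1 \<noteq> c4" "c2 \<noteq> c3" "c2 \<noteq> c4" "c3 \<noteq> c4"
    and z: "z1 \<in> F c1" "z2 \<in> F c2" "z3 \<in> F c3" "z4 \<in> F c4"
  shows "\<exists>r. (\<forall>v\<in>verts P. r v \<in> F v) \<and> r c1 = z1 \<and> r c2 = z2 \<and> r c3 = z3 \<and> r c4 = z4"
proof -
  define r where "r v = (if v = c1 then z1 else if v = c2 then z2 else if v = c3 then z3
      else if v = c4 then z4 else (SOME z. z \<in> F v))" for v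
  have "\<forall>v\<in>verts P. r v \<in> F v"
  proof
    fix v assume v: "v \<in> verts P"
    show "r v \<in> F v"
    proof (cases "v = c1 \<or> v = c2 \<or> v = c3 \<or> v = c4")
      case True then show ?thesis using z unfolding r_def by auto
    next
      case False
      then have "r v = (SOME z. z \<in> F v)" unfolding r_def by auto
      moreover have "\<exists>z. z \<in> F v" using ne v by blast
      ultimately show ?thesis by (metis someI_ex)
    qed
  qed
  moreover have "r c1 = z1 \<and> r c2 = z2 \<and> r c3 = z3 \<and> r c4 = z4" unfolding r_def using c by auto
  ultimately show ?thesis by blast
qed

lemma card_union_small:
  assumes f: "finite S" "\<forall>a\<in>S. finite (F a)" and sm: "\<forall>a\<in>S. card (F a) < c"
  shows "card (\<Union>a\<in>S. F a) \<le> card S * (c - 1)"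
proof -
  have "card (\<Union>a\<in>S. F a) \<le> (\<Sum>a\<in>S. card (F a))" using f(1) by (rule card_UN_le)
  also have "\<dots> \<le> (\<Sum>a\<in>S. c - 1)" using sm by (intro sum_mono) fastforce
  also have "\<dots> = card S * (c - 1)" by simp
  finally show ?thesis .
qed

theorem mainTheorem5:
  fixes G :: "'a graph" and D :: "'a graph set" and P :: "'a graph" and k :: nat and b :: 'a
  assumes "simple_graph G"
    and "k > 0"
    and "split_decomposition G D"
    and "P \<in> D"
    and "card (verts P) > 3"
    and "sm_width_less G k"
    and "b \<in> verts P"
    and "card (act G D P b) \<ge> 3 * k"
    and "card (act_set G D P (nbr P b)) \<ge> 9 * k"
  shows "\<exists>a\<in>nbr P b. card (act G D P a) \<ge> 3 * k"
proof (rule ccontr)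
  assume neg: "\<not> (\<exists>a\<in>nbr P b. card (act G D P a) \<ge> 3 * k)"
  have sg: "simple_graph G" and k: "k > 0" and PD: "P \<in> D" and bP: "b \<in> verts P" using assms by auto
  have small: "\<forall>a\<in>nbr P b. card (act G D P a) < 3 * k" using neg by auto
  have sd: "split_dec G D" and prm: "\<forall>Q\<in>D. prime_graph Q" using assms(3) unfolding split_decomposition_def by auto
  have I: "inv G D" using split_dec_inv[OF sg sd] .
  have cG: "connected G" using split_dec_conn[OF sd] .
  have finV: "finite (verts G)" using sg unfolding simple_graph_def by blast
  have finP: "finite (verts P)" using assms(5) card.infinite by fastforce
  have adjP: "\<And>x y. adj P x y \<Longrightarrow> adj P y x \<and> x \<in> verts P \<and> y \<in> verts P \<and> x \<noteq> y"
    using inv_adj[OF I PD] by blast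
  have sG: "\<And>x y. adj G x y \<Longrightarrow> adj G y x" using sg unfolding simple_graph_def by blast
  have bnb: "b \<notin> nbr P b" using adjP unfolding nbr_def by blast
  have nbP: "nbr P b \<subseteq> verts P" unfolding nbr_def by blast
  define X where "X = act G D P b"
  define Y where "Y = act_set G D P (nbr P b)"
  have Y_eq: "Y = (\<Union>a\<in>nbr P b. act G D P a)" unfolding Y_def act_set_def ..
  have acV: "\<And>u. act G D P u \<subseteq> verts G" using act_sub tot_sub by (meson subset_trans)
  have finac: "\<And>u. finite (act G D P u)" using acV finV finite_subset by blast
  have XV: "X \<subseteq> verts G" unfolding X_def using acV .
  have YV: "Y \<subseteq> verts G" unfolding Y_eq using acV by blast
  have finY: "finite Y" using YV finV finite_subset by blast
  have finX: "finite X" using XV finV finite_subset by blast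
  have cX: "card X \<ge> 3 * k" using assms(8) X_def by simp
  have cY: "card Y \<ge> 9 * k" using assms(9) Y_def by simp
  have compl: "\<forall>x\<in>X. \<forall>y\<in>Y. adj G x y"
  proof (intro ballI)
    fix x y assume x: "x \<in> X" and y: "y \<in> Y"
    then obtain a where a: "a \<in> nbr P b" "y \<in> act G D P a" unfolding Y_eq by blast
    have ab: "adj P b a" "a \<in> verts P" "b \<noteq> a" using a(1) adjP unfolding nbr_def by auto
    have "x \<in> tot G D P b" using subsetD[OF act_sub x[unfolded X_def]] .
    moreover have "y \<in> tot G D P a" using subsetD[OF act_sub a(2)] .
    ultimately show "adj G x y" using inv_adjG[OF I PD bP ab(2) ab(3)] ab(1) x a(2) unfolding X_def by blast
  qed
  obtain N E \<delta> where bd: "branch_decomposition G N E \<delta>"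
    and wd: "\<forall>e\<in>E. \<forall>x\<in>e. sm G (induced_cut N E \<delta> e x) < k"
    using assms(6) unfolding sm_width_less_def by blast
  have T: "tree N E" and deg: "\<forall>x\<in>N. tdeg E x \<le> 3" and bij: "bij_betw \<delta> (leaves N E) (verts G)"
    using bd unfolding branch_decomposition_def by auto
  have img: "\<delta> ` leaves N E = verts G" using bij by (simp add: bij_betw_def)
  obtain e x where ex: "e \<in> E" "x \<in> e"
    and bal: "card (Y \<inter> induced_cut N E \<delta> e x) \<ge> 3 * k" "card (Y - induced_cut N E \<delta> e x) \<ge> 3 * k"
    using balanced[OF T deg _ finY cY k] YV img by blast
  define A where "A = induced_cut N E \<delta> e x"
  have AV: "A \<subseteq> verts G" unfolding A_def induced_cut_def using img by blast
  have smk: "sm G A < k" using wd ex unfolding A_def by blast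
  have YA: "card (Y \<inter> A) \<ge> 3 * k" "card (Y - A) \<ge> 3 * k" using bal A_def by auto
  have cYsplit: "card Y = card (Y \<inter> A) + card (Y - A)" using finY by (metis card_Int_Diff)
  have nsplit: "\<not> is_split G A (verts G - A)"
  proof
    assume sp: "is_split G A (verts G - A)"
    define SA where "SA = {a \<in> nbr P b. act G D P a \<inter> A \<noteq> {}}"
    define SB where "SB = {a \<in> nbr P b. act G D P a - A \<noteq> {}}"
    have SAn: "SA \<subseteq> nbr P b" "SB \<subseteq> nbr P b" unfolding SA_def SB_def by auto
    have finS: "finite SA" "finite SB"
      using finite_subset[OF subset_trans[OF SAn(1) nbP] finP] finite_subset[OF subset_trans[OF SAn(2) nbP] finP]
      by simp_all
    have YAsub: "Y \<inter> A \<subseteq> (\<Union>a\<in>SA. act G D P a)" unfolding Y_eq SA_def by blast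
    have YBsub: "Y - A \<subseteq> (\<Union>a\<in>SB. act G D P a)" unfolding Y_eq SB_def by blast
    have cu: "card (\<Union>a\<in>S. act G D P a) \<le> card S * (3 * k - 1)" if Sn: "S \<subseteq> nbr P b" "finite S" for S
    proof -
      have "\<forall>a\<in>S. finite (act G D P a)" using finac by simp
      moreover have "\<forall>a\<in>S. card (act G D P a) < 3 * k" using small Sn(1) by blast
      ultimately show ?thesis by (rule card_union_small[OF Sn(2)])
    qed
    have cSA: "card SA \<ge> 2"
    proof (rule ccontr)
      assume "\<not> ?thesis"
      then have "card SA \<le> 1" by simp
      then have "card SA * (3 * k - 1) \<le> 1 * (3 * k - 1)" by (rule mult_le_mono1)
      then have "card (\<Union>a\<in>SA. act G D P a) \<le> 1 * (3 * k - 1)"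
        using cu[OF SAn(1) finS(1)] by linarith
      moreover have "card (Y \<inter> A) \<le> card (\<Union>a\<in>SA. act G D P a)"
        using YAsub finS(1) finac by (intro card_mono) simp_all
      ultimately show False using YA(1) k by linarith
    qed
    have cSB: "card SB \<ge> 2"
    proof (rule ccontr)
      assume "\<not> ?thesis"
      then have "card SB \<le> 1" by simp
      then have "card SB * (3 * k - 1) \<le> 1 * (3 * k - 1)" by (rule mult_le_mono1)
      then have "card (\<Union>a\<in>SB. act G D P a) \<le> 1 * (3 * k - 1)"
        using cu[OF SAn(2) finS(2)] by linarith
      moreover have "card (Y - A) \<le> card (\<Union>a\<in>SB. act G D P a)"
        using YBsub finS(2) finac by (intro card_mono) simp_all
      ultimately show False using YA(2) k by linarith
    qed
    have bad: False if "S \<subseteq> nbr P b" "finite S" "card S \<le> 2" "SA \<subseteq> S" "SB \<subseteq> S" for S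
    proof -
      have "Y \<subseteq> (\<Union>a\<in>S. act G D P a)" using YAsub YBsub that(4,5) by blast
      then have "card Y \<le> card (\<Union>a\<in>S. act G D P a)" using that(2) finac by (intro card_mono) simp_all
      also have "\<dots> \<le> card S * (3 * k - 1)" using cu[OF that(1,2)] .
      also have "\<dots> \<le> 2 * (3 * k - 1)" using that(3) by (rule mult_le_mono1)
      finally show False using cYsplit YA k by linarith
    qed
    have n1: "\<not> (SA \<subseteq> SB \<and> card SB \<le> 2)" using bad[OF SAn(2) finS(2)] by blast
    have n2: "\<not> (SB \<subseteq> SA \<and> card SA \<le> 2)" using bad[OF SAn(1) finS(1)] by blast
    have acne: "\<forall>v\<in>verts P. act G D P v \<noteq> {}"
    proof
      fix v assume v: "v \<in> verts P"
      obtain p q where pq: "p \<in> verts P" "q \<in> verts P" "p \<noteq> q"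
        using two_elems[OF finP] assms(5) by fastforce
      obtain w where "w \<in> verts P" "w \<noteq> v" using pq by metis
      then show "act G D P v \<noteq> {}" using act_ne[OF sg cG I PD v] by blast
    qed
    have Xne: "X \<noteq> {}" using cX k finX by auto
    have SAP: "\<And>a. a \<in> SA \<Longrightarrow> a \<in> verts P \<and> a \<noteq> b" and SBP: "\<And>a. a \<in> SB \<Longrightarrow> a \<in> verts P \<and> a \<noteq> b"
      using SAn nbP bnb by blast+
    have "\<exists>p1 p2 q1 q2 r. p1 \<in> verts P \<and> p2 \<in> verts P \<and> p1 \<noteq> p2 \<and> q1 \<in> verts P \<and> q2 \<in> verts P \<and> q1 \<noteq> q2
          \<and> (\<forall>v\<in>verts P. r v \<in> act G D P v) \<and> r p1 \<in> A \<and> r p2 \<in> A \<and> r q1 \<notin> A \<and> r q2 \<notin> A"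
    proof (cases "X \<inter> A \<noteq> {}")
      case True
      then obtain xb where xb: "xb \<in> act G D P b" "xb \<in> A" unfolding X_def by blast
      obtain a1 a3 a4 where a: "a1 \<in> SA" "a3 \<in> SB" "a4 \<in> SB" "a3 \<noteq> a4" "a1 \<noteq> a3" "a1 \<noteq> a4"
        using pick3[OF finS cSA cSB n1] by blast
      obtain x1 where x1: "x1 \<in> act G D P a1" "x1 \<in> A" using a(1) unfolding SA_def by blast
      obtain y3 where y3: "y3 \<in> act G D P a3" "y3 \<notin> A" using a(2) unfolding SB_def by blast
      obtain y4 where y4: "y4 \<in> act G D P a4" "y4 \<notin> A" using a(3) unfolding SB_def by blast
      have d: "b \<noteq> a1" "b \<noteq> a3" "b \<noteq> a4" using SAP[OF a(1)] SBP[OF a(2)] SBP[OF a(3)] by auto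
      obtain r where r: "\<forall>v\<in>verts P. r v \<in> act G D P v" "r b = xb" "r a1 = x1" "r a3 = y3" "r a4 = y4"
        using make_r[OF acne d a(5) a(6) a(4) xb(1) x1(1) y3(1) y4(1)] by blast
      show ?thesis
        apply (rule exI[of _ b], rule exI[of _ a1], rule exI[of _ a3], rule exI[of _ a4], rule exI[of _ r])
        using bP SAP[OF a(1)] SBP[OF a(2)] SBP[OF a(3)] d a r xb x1 y3 y4 by auto
    next
      case False
      then obtain xb where xb: "xb \<in> act G D P b" "xb \<notin> A" using Xne unfolding X_def by blast
      obtain a3 a1 a2 where a: "a3 \<in> SB" "a1 \<in> SA" "a2 \<in> SA" "a1 \<noteq> a2" "a3 \<noteq> a1" "a3 \<noteq> a2"
        using pick3[OF finS(2) finS(1) cSB cSA n2] by blast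
      obtain x1 where x1: "x1 \<in> act G D P a1" "x1 \<in> A" using a(2) unfolding SA_def by blast
      obtain x2 where x2: "x2 \<in> act G D P a2" "x2 \<in> A" using a(3) unfolding SA_def by blast
      obtain y3 where y3: "y3 \<in> act G D P a3" "y3 \<notin> A" using a(1) unfolding SB_def by blast
      have d: "b \<noteq> a3" "b \<noteq> a1" "b \<noteq> a2" using SAP[OF a(2)] SAP[OF a(3)] SBP[OF a(1)] by auto
      obtain r where r: "\<forall>v\<in>verts P. r v \<in> act G D P v" "r b = xb" "r a3 = y3" "r a1 = x1" "r a2 = x2"
        using make_r[OF acne d a(5) a(6) a(4) xb(1) y3(1) x1(1) x2(1)] by blast
      show ?thesis
        apply (rule exI[of _ a1], rule exI[of _ a2], rule exI[of _ a3], rule exI[of _ b], rule exI[of _ r])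
        using bP SAP[OF a(2)] SAP[OF a(3)] SBP[OF a(1)] d a r xb x1 x2 y3 by auto
    qed
    then obtain p1 p2 q1 q2 r where
      pr: "p1 \<in> verts P" "p2 \<in> verts P" "p1 \<noteq> p2" "q1 \<in> verts P" "q2 \<in> verts P" "q1 \<noteq> q2"
        "\<forall>v\<in>verts P. r v \<in> act G D P v" "r p1 \<in> A" "r p2 \<in> A" "r q1 \<notin> A" "r q2 \<notin> A"
      by blast
    have "is_split P {v\<in>verts P. r v \<in> A} {v\<in>verts P. r v \<notin> A}"
      using split_from_reps[OF sg I PD sp pr(7) pr(1,2,3,8,9) pr(4,5,6,10,11) finP] .
    then show False using prm PD unfolding prime_graph_def by blast
  qed
  have smm: "sm G A = mm G A" using nsplit unfolding sm_def by simp
  have "card X = card (X \<inter> A) + card (X - A)" using finX by (metis card_Int_Diff)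
  then have "card (X \<inter> A) \<ge> k \<or> card (X - A) \<ge> k" using cX k by linarith
  then have "mm G A \<ge> k"
  proof
    assume "card (X \<inter> A) \<ge> k"
    moreover have "card (Y - A) \<ge> k" using YA by linarith
    moreover have "\<forall>s\<in>X \<inter> A. \<forall>s'\<in>Y - A. adj G s s'" using compl by blast
    ultimately show ?thesis using mm_ge[OF finV, of "X \<inter> A" A "Y - A" k] YV AV by blast
  next
    assume "card (X - A) \<ge> k"
    moreover have "card (Y \<inter> A) \<ge> k" using YA by linarith
    moreover have "\<forall>s\<in>Y \<inter> A. \<forall>s'\<in>X - A. adj G s s'" using compl sG by blast
    ultimately show ?thesis using mm_ge[OF finV, of "Y \<inter> A" A "X - A" k] XV AV by blast
  qed
  then show False using smk smm by simp
qed

end
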